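(* Let $\mathcal I$ be $\mathcal I_\omega$ or $\mathcal I_0$. For every set $\Gamma\subseteq\mathbb T(\Sigma)$ and every $t\in\mathbb T(\Sigma)$: $\Gamma\Vdash_{\mathcal I}t$ if and only if $\Gamma\vdash_{\mathcal I}t$.
   Context: Illative systems. Fix a finite set $\mathcal B$ of base types and a set $\Sigma$ of primitive constants containing $\Xi$, $L$ and $A_\tau$ for each $\tau\in\mathcal B$. $\mathbb T(\Sigma)$ is the set of type-free lambda-terms over $\Sigma$. Abbreviations: $I=\lambda x.x$, $K=\lambda xy.x$, $H=\lambda x.L(Kx)$, $\supset\;=\lambda xy.\Xi(Kx)(Ky)$ (infix, right-associative), $F=\lambda xyf.\Xi x(\lambda z.y(fz))$. Judgements are $\Gamma\vdash t$ with $\Gamma$ finite. $\mathcal I_\omega$ has axioms $\Gamma,t\vdash t$; $\Gamma\vdash LH$; $\Gamma\vdash LA_\tau$ ($\tau\in\mathcal B$); and rules: (Eq) from $\Gamma\vdash t_1$ and $t_1=_{\beta\eta}t_2$ infer $\Gamma\vdash t_2$; ($H_i$) from $\Gamma\vdash t$ infer $\Gamma\vdash Ht$; ($\Xi_e$) from $\Gamma\vdash\Xi t_1t_2$ and $\Gamma\vdash t_1t_3$ infer $\Gamma\vdash t_2t_3$; ($\Xi_i$) from $\Gamma,t_1x\vdash t_2x$ and $\Gamma\vdash Lt_1$ infer $\Gamma\vdash\Xi t_1t_2$; ($\Xi_H$) from $\Gamma,t_1x\vdash H(t_2x)$ and $\Gamma\vdash Lt_1$ infer $\Gamma\vdash H(\Xi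 t_1t_2)$; ($F_L$) from $\Gamma,t_1x\vdash Lt_2$ and $\Gamma\vdash Lt_1$ infer $\Gamma\vdash L(Ft_1t_2)$; in the last three $x\notin FV(\Gamma,t_1,t_2)$. $\mathcal I_0$ is $\mathcal I_\omega$ without $F_L$. For arbitrary $\Gamma$, $\Gamma\vdash_{\mathcal I}t$ means some finite $\Gamma'\subseteq\Gamma$ has $\Gamma'\vdash t$ derivable in $\mathcal I$. A combinatory algebra is $\langle C,\cdot,S,K\rangle$ with $SXYZ=XZ(YZ)$, $KXY=X$; extensional if $M_1X=M_2X$ for all $X$ implies $M_1=M_2$. An illative Kripke pre-model is $\langle\mathcal S,\le,\mathcal C,I,\varsigma\rangle$: $\le$ a partial order on states $\mathcal S$, $\mathcal C$ an extensional combinatory algebra, $I:\Sigma\to\mathcal C$, $\varsigma$ assigns to each element of $\mathcal C$ an upward-closed subset of $\mathcal S$. For a valuation $u$ (variables to $\mathcal C$): $[\![x]\!]_u=u(x)$, $[\![c]\!]_u=I(c)$, $[\![t_1t_2]\!]_u=[\![t_1]\!]_u\cdot[\![t_2]\!]_u$, $[\![\lambda x.t]\!]_u$ the unique $d$ with $d\cdot d'=[\![t]\!]_{u[x/d']}$ for all $d'$. An illative Kripke model for $\mathcal I_\omega$ is a pre-model such that for all $X,Y\in\mathcal C$, $s\in\mathcal S$ (writing $\Xi,L,H,F,A_\tau$ for their values): (1) if $s\in\varsigma(LX)$ and for all $s'\ge s$, $Z\in\mathcal C$ with $s'\in\varsigma(XZ)$ we have $s'\in\varsigma(YZ)$, then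 $s\in\varsigma(\Xi XY)$; (2) if $s\in\varsigma(\Xi XY)$ then for all $Z$ with $s\in\varsigma(XZ)$, $s\in\varsigma(YZ)$; (3) if $s\in\varsigma(LX)$ and for all $s'\ge s$, $Z$ with $s'\in\varsigma(XZ)$ we have $s'\in\varsigma(H(YZ))$, then $s\in\varsigma(H(\Xi XY))$; (4) if $s\in\varsigma(LX)$ and for all $s'\ge s$ such that $s'\in\varsigma(XZ)$ for some $Z$ we have $s'\in\varsigma(LY)$, then $s\in\varsigma(L(FXY))$; (5) $s\in\varsigma(X)$ implies $s\in\varsigma(HX)$; (6) $s\in\varsigma(LH)$; (7) $s\in\varsigma(LA_\tau)$ for $\tau\in\mathcal B$. For $\mathcal I_0$ omit (4). Write $s,u\Vdash_{\mathcal M}t$ iff $s\in\varsigma([\![t]\!]_u)$. $\Gamma\Vdash_{\mathcal I}t$ means: for every illative Kripke model $\mathcal M$ for $\mathcal I$, state $s$ and valuation $u$ with $s,u\Vdash_{\mathcal M}t'$ for all $t'\in\Gamma$, we have $s,u\Vdash_{\mathcal M}t$. *)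

theory Defs
  imports Main
begin

section \<open>Signature and type-free lambda terms (de Bruijn indices)\<close>

text \<open>Primitive constants: Xi, L, A_tau for each base type tau (base types = the
  finite type 'b), plus arbitrary further constants of type 'c.\<close>
datatype ('b, 'c) const = Xi | Lc | At 'b | Oth 'c

text \<open>Free variables are the indices not bound by an enclosing Lam.\<close>
datatype ('b, 'c) trm =
    Var nat
  | Cst "('b, 'c) const"
  | App "('b, 'c) trm" "('b, 'c) trm"
  | Lam "('b, 'c) trm"

fun lift :: "nat \<Rightarrow> ('b, 'c) trm \<Rightarrow> ('b, 'c) trm" where
  "lift k (Var i) = (if i < k then Var i else Var (Suc i))"
| "lift k (Cst c) = Cst c"
| "lift k (App s t) = App (lift k s) (lift k t)"
| "lift k (Lam t) = Lam (lift (Suc k) t)"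

fun subst :: "('b, 'c) trm \<Rightarrow> nat \<Rightarrow> ('b, 'c) trm \<Rightarrow> ('b, 'c) trm" where
  "subst (Var i) k s = (if i < k then Var i else if i = k then s else Var (i - 1))"
| "subst (Cst c) k s = Cst c"
| "subst (App t u) k s = App (subst t k s) (subst u k s)"
| "subst (Lam t) k s = Lam (subst t (Suc k) (lift 0 s))"

fun fv :: "('b, 'c) trm \<Rightarrow> nat set" where
  "fv (Var i) = {i}"
| "fv (Cst c) = {}"
| "fv (App s t) = fv s \<union> fv t"
| "fv (Lam t) = {n. Suc n \<in> fv t}"

definition fvs :: "('b, 'c) trm set \<Rightarrow> nat set" where
  "fvs \<Gamma> = (\<Union>t\<in>\<Gamma>. fv t)"

inductive beta_eta :: "('b, 'c) trm \<Rightarrow> ('b, 'c) trm \<Rightarrow> bool" where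
  beta: "beta_eta (App (Lam s) t) (subst s 0 t)"
| eta: "beta_eta (Lam (App (lift 0 s) (Var 0))) s"
| appL: "beta_eta s s' \<Longrightarrow> beta_eta (App s t) (App s' t)"
| appR: "beta_eta t t' \<Longrightarrow> beta_eta (App s t) (App s t')"
| lam: "beta_eta s s' \<Longrightarrow> beta_eta (Lam s) (Lam s')"

definition beq :: "('b, 'c) trm \<Rightarrow> ('b, 'c) trm \<Rightarrow> bool" where
  "beq = equivclp beta_eta"

definition XiT :: "('b, 'c) trm" where "XiT = Cst Xi"
definition LT :: "('b, 'c) trm" where "LT = Cst Lc"
definition IT :: "('b, 'c) trm" where "IT = Lam (Var 0)"
definition KT :: "('b, 'c) trm" where "KT = Lam (Lam (Var 1))"
definition HT :: "('b, 'c) trm" where "HT = Lam (App LT (App KT (Var 0)))"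
definition FT :: "('b, 'c) trm" where
  "FT = Lam (Lam (Lam (App (App XiT (Var 2)) (Lam (App (Var 2) (App (Var 1) (Var 0)))))))"

section \<open>The illative systems I_omega (om = True) and I_0 (om = False)\<close>

inductive derives :: "bool \<Rightarrow> ('b, 'c) trm set \<Rightarrow> ('b, 'c) trm \<Rightarrow> bool" for om where
  ax: "finite \<Gamma> \<Longrightarrow> derives om (insert t \<Gamma>) t"
| LH: "finite \<Gamma> \<Longrightarrow> derives om \<Gamma> (App LT HT)"
| LA: "finite \<Gamma> \<Longrightarrow> derives om \<Gamma> (App LT (Cst (At \<tau>)))"
| Eq: "derives om \<Gamma> t1 \<Longrightarrow> beq t1 t2 \<Longrightarrow> derives om \<Gamma> t2"
| Hi: "derives om \<Gamma> t \<Longrightarrow> derives om \<Gamma> (App HT t)"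
| Xie: "derives om \<Gamma> (App (App XiT t1) t2) \<Longrightarrow> derives om \<Gamma> (App t1 t3)
         \<Longrightarrow> derives om \<Gamma> (App t2 t3)"
| Xii: "derives om (insert (App t1 (Var x)) \<Gamma>) (App t2 (Var x)) \<Longrightarrow> derives om \<Gamma> (App LT t1)
         \<Longrightarrow> x \<notin> fvs \<Gamma> \<union> fv t1 \<union> fv t2 \<Longrightarrow> derives om \<Gamma> (App (App XiT t1) t2)"
| XiH: "derives om (insert (App t1 (Var x)) \<Gamma>) (App HT (App t2 (Var x))) \<Longrightarrow> derives om \<Gamma> (App LT t1)
         \<Longrightarrow> x \<notin> fvs \<Gamma> \<union> fv t1 \<union> fv t2 \<Longrightarrow> derives om \<Gamma> (App HT (App (App XiT t1) t2))"
| FL: "om \<Longrightarrow> derives om (insert (App t1 (Var x)) \<Gamma>) (App LT t2) \<Longrightarrow> derives om \<Gamma> (App LT t1)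
         \<Longrightarrow> x \<notin> fvs \<Gamma> \<union> fv t1 \<union> fv t2 \<Longrightarrow> derives om \<Gamma> (App LT (App (App FT t1) t2))"

text \<open>Gamma |-_I t for arbitrary Gamma: some finite subset derives t.\<close>
definition provable :: "bool \<Rightarrow> ('b, 'c) trm set \<Rightarrow> ('b, 'c) trm \<Rightarrow> bool" where
  "provable om \<Gamma> t \<longleftrightarrow> (\<exists>\<Gamma>'. \<Gamma>' \<subseteq> \<Gamma> \<and> finite \<Gamma>' \<and> derives om \<Gamma>' t)"

text \<open>Combinatory algebra with carrier set C (inside the ambient type 'd).\<close>
definition comb_alg :: "'d set \<Rightarrow> ('d \<Rightarrow> 'd \<Rightarrow> 'd) \<Rightarrow> 'd \<Rightarrow> 'd \<Rightarrow> bool" where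
  "comb_alg C ap S K \<longleftrightarrow> S \<in> C \<and> K \<in> C \<and> (\<forall>X\<in>C. \<forall>Y\<in>C. ap X Y \<in> C)
     \<and> (\<forall>X\<in>C. \<forall>Y\<in>C. \<forall>Z\<in>C. ap (ap (ap S X) Y) Z = ap (ap X Z) (ap Y Z))
     \<and> (\<forall>X\<in>C. \<forall>Y\<in>C. ap (ap K X) Y = X)"

definition extensional_ca :: "'d set \<Rightarrow> ('d \<Rightarrow> 'd \<Rightarrow> 'd) \<Rightarrow> bool" where
  "extensional_ca C ap \<longleftrightarrow>
     (\<forall>M1\<in>C. \<forall>M2\<in>C. (\<forall>X\<in>C. ap M1 X = ap M2 X) \<longrightarrow> M1 = M2)"

definition scons :: "'d \<Rightarrow> (nat \<Rightarrow> 'd) \<Rightarrow> nat \<Rightarrow> 'd" where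
  "scons d u = (\<lambda>n. case n of 0 \<Rightarrow> d | Suc m \<Rightarrow> u m)"

fun eval :: "'d set \<Rightarrow> ('d \<Rightarrow> 'd \<Rightarrow> 'd) \<Rightarrow> (('b, 'c) const \<Rightarrow> 'd) \<Rightarrow> (nat \<Rightarrow> 'd)
             \<Rightarrow> ('b, 'c) trm \<Rightarrow> 'd" where
  "eval C ap I u (Var n) = u n"
| "eval C ap I u (Cst c) = I c"
| "eval C ap I u (App s t) = ap (eval C ap I u s) (eval C ap I u t)"
| "eval C ap I u (Lam t) = (THE d. d \<in> C \<and> (\<forall>d'\<in>C. ap d d' = eval C ap I (scons d' u) t))"

definition premodel :: "'s set \<Rightarrow> ('s \<Rightarrow> 's \<Rightarrow> bool) \<Rightarrow> 'd set \<Rightarrow> ('d \<Rightarrow> 'd \<Rightarrow> 'd) \<Rightarrow> 'd \<Rightarrow> 'd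
      \<Rightarrow> (('b, 'c) const \<Rightarrow> 'd) \<Rightarrow> ('d \<Rightarrow> 's set) \<Rightarrow> bool" where
  "premodel St le C ap S K I vs \<longleftrightarrow>
     (\<forall>s\<in>St. le s s) \<and> (\<forall>s\<in>St. \<forall>s'\<in>St. le s s' \<and> le s' s \<longrightarrow> s = s')
     \<and> (\<forall>s1\<in>St. \<forall>s2\<in>St. \<forall>s3\<in>St. le s1 s2 \<and> le s2 s3 \<longrightarrow> le s1 s3)
     \<and> comb_alg C ap S K \<and> extensional_ca C ap
     \<and> (\<forall>c. I c \<in> C)
     \<and> (\<forall>X\<in>C. vs X \<subseteq> St \<and> (\<forall>s\<in>vs X. \<forall>s'\<in>St. le s s' \<longrightarrow> s' \<in> vs X))"

text \<open>Illative Kripke model for I_omega (om = True) or I_0 (om = False).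
  The values of the closed terms H and F are taken under an arbitrary valuation
  (here the constant valuation K).\<close>
definition kmodel :: "bool \<Rightarrow> 's set \<Rightarrow> ('s \<Rightarrow> 's \<Rightarrow> bool) \<Rightarrow> 'd set \<Rightarrow> ('d \<Rightarrow> 'd \<Rightarrow> 'd) \<Rightarrow> 'd \<Rightarrow> 'd
      \<Rightarrow> (('b, 'c) const \<Rightarrow> 'd) \<Rightarrow> ('d \<Rightarrow> 's set) \<Rightarrow> bool" where
  "kmodel om St le C ap S K I vs \<longleftrightarrow> premodel St le C ap S K I vs \<and>
     (let XiV = I Xi; LV = I Lc;
          HV = eval C ap I (\<lambda>_. K) (HT :: ('b, 'c) trm);
          FV = eval C ap I (\<lambda>_. K) (FT :: ('b, 'c) trm) in
      \<forall>X\<in>C. \<forall>Y\<in>C. \<forall>s\<in>St.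
        ((s \<in> vs (ap LV X) \<and>
          (\<forall>s'\<in>St. \<forall>Z\<in>C. le s s' \<and> s' \<in> vs (ap X Z) \<longrightarrow> s' \<in> vs (ap Y Z)))
           \<longrightarrow> s \<in> vs (ap (ap XiV X) Y))
      \<and> (s \<in> vs (ap (ap XiV X) Y) \<longrightarrow> (\<forall>Z\<in>C. s \<in> vs (ap X Z) \<longrightarrow> s \<in> vs (ap Y Z)))
      \<and> ((s \<in> vs (ap LV X) \<and>
          (\<forall>s'\<in>St. \<forall>Z\<in>C. le s s' \<and> s' \<in> vs (ap X Z) \<longrightarrow> s' \<in> vs (ap HV (ap Y Z))))
           \<longrightarrow> s \<in> vs (ap HV (ap (ap XiV X) Y)))
      \<and> (om \<longrightarrow> (s \<in> vs (ap LV X) \<and>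
          (\<forall>s'\<in>St. le s s' \<and> (\<exists>Z\<in>C. s' \<in> vs (ap X Z)) \<longrightarrow> s' \<in> vs (ap LV Y)))
           \<longrightarrow> s \<in> vs (ap LV (ap (ap FV X) Y)))
      \<and> (s \<in> vs X \<longrightarrow> s \<in> vs (ap HV X))
      \<and> s \<in> vs (ap LV HV)
      \<and> (\<forall>\<tau>. s \<in> vs (ap LV (I (At \<tau>)))))"

text \<open>Gamma ||-_I t, restricted to models whose carrier lies in type 'd and whose
  states lie in type 's.\<close>
definition valid_at :: "'d itself \<Rightarrow> 's itself \<Rightarrow> bool \<Rightarrow> ('b, 'c) trm set \<Rightarrow> ('b, 'c) trm \<Rightarrow> bool" where
  "valid_at (_ :: 'd itself) (_ :: 's itself) om \<Gamma> t \<longleftrightarrow>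
     (\<forall>(St :: 's set) le (C :: 'd set) ap S K I vs. kmodel om St le C ap S K I vs \<longrightarrow>
        (\<forall>s\<in>St. \<forall>u. (\<forall>n. u n \<in> C) \<longrightarrow>
           (\<forall>t'\<in>\<Gamma>. s \<in> vs (eval C ap I u t')) \<longrightarrow> s \<in> vs (eval C ap I u t)))"

end

theory Submission
  imports Defs
begin

definition liftf :: "(nat \<Rightarrow> nat) \<Rightarrow> nat \<Rightarrow> nat" where
  "liftf f n = (case n of 0 \<Rightarrow> 0 | Suc m \<Rightarrow> Suc (f m))"

lemma liftf_simps[simp]: "liftf f 0 = 0" "liftf f (Suc m) = Suc (f m)"
  by (simp_all add: liftf_def)

fun ren :: "(nat \<Rightarrow> nat) \<Rightarrow> ('b,'c) trm \<Rightarrow> ('b,'c) trm" where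
  "ren f (Var i) = Var (f i)"
| "ren f (Cst c) = Cst c"
| "ren f (App s t) = App (ren f s) (ren f t)"
| "ren f (Lam t) = Lam (ren (liftf f) t)"

definition up :: "(nat \<Rightarrow> ('b,'c) trm) \<Rightarrow> nat \<Rightarrow> ('b,'c) trm" where
  "up \<sigma> n = (case n of 0 \<Rightarrow> Var 0 | Suc m \<Rightarrow> ren Suc (\<sigma> m))"

lemma up_simps[simp]: "up \<sigma> 0 = Var 0" "up \<sigma> (Suc m) = ren Suc (\<sigma> m)"
  by (simp_all add: up_def)

fun psubst :: "(nat \<Rightarrow> ('b,'c) trm) \<Rightarrow> ('b,'c) trm \<Rightarrow> ('b,'c) trm" where
  "psubst \<sigma> (Var i) = \<sigma> i"
| "psubst \<sigma> (Cst c) = Cst c"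
| "psubst \<sigma> (App s t) = App (psubst \<sigma> s) (psubst \<sigma> t)"
| "psubst \<sigma> (Lam t) = Lam (psubst (up \<sigma>) t)"

lemma ren_cong: "(\<And>i. i \<in> fv t \<Longrightarrow> f i = g i) \<Longrightarrow> ren f t = ren g t"
proof (induction t arbitrary: f g)
  case (Lam t)
  have "ren (liftf f) t = ren (liftf g) t"
  proof (rule Lam.IH)
    fix i assume "i \<in> fv t" then show "liftf f i = liftf g i"
      using Lam.prems by (cases i) auto
  qed
  then show ?case by simp
next
  case (App s u)
  have "ren f s = ren g s" by (rule App.IH(1)) (simp add: App.prems)
  moreover have "ren f u = ren g u" by (rule App.IH(2)) (simp add: App.prems)
  ultimately show ?case by simp
qed simp_all

lemma psubst_cong: "(\<And>i. i \<in> fv t \<Longrightarrow> f i = g i) \<Longrightarrow> psubst f t = psubst g t"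
proof (induction t arbitrary: f g)
  case (Lam t)
  have "psubst (up f) t = psubst (up g) t"
  proof (rule Lam.IH)
    fix i assume "i \<in> fv t" then show "up f i = up g i"
      using Lam.prems by (cases i) auto
  qed
  then show ?case by simp
next
  case (App s u)
  have "psubst f s = psubst g s" by (rule App.IH(1)) (simp add: App.prems)
  moreover have "psubst f u = psubst g u" by (rule App.IH(2)) (simp add: App.prems)
  ultimately show ?case by simp
qed simp_all

lemma liftf_comp: "liftf f \<circ> liftf g = liftf (f \<circ> g)"
  by (auto simp: liftf_def split: nat.splits)

lemma ren_ren: "ren f (ren g t) = ren (f \<circ> g) t"
  by (induction t arbitrary: f g) (auto simp: liftf_comp)

lemma up_ren: "up \<sigma> \<circ> liftf f = up (\<sigma> \<circ> f)"
  by (auto simp: fun_eq_iff liftf_def up_def split: nat.splits)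

lemma psubst_ren: "psubst \<sigma> (ren f t) = psubst (\<sigma> \<circ> f) t"
  by (induction t arbitrary: \<sigma> f) (auto simp: up_ren)

lemma ren_up: "ren (liftf f) \<circ> up \<sigma> = up (ren f \<circ> \<sigma>)"
proof
  fix n show "(ren (liftf f) \<circ> up \<sigma>) n = up (ren f \<circ> \<sigma>) n"
    by (cases n) (auto simp: ren_ren liftf_def comp_def)
qed

lemma ren_psubst: "ren f (psubst \<sigma> t) = psubst (ren f \<circ> \<sigma>) t"
  by (induction t arbitrary: \<sigma> f) (auto simp: ren_up)

lemma up_comp: "psubst (up \<sigma>) \<circ> up \<tau> = up (psubst \<sigma> \<circ> \<tau>)"
proof
  fix n show "(psubst (up \<sigma>) \<circ> up \<tau>) n = up (psubst \<sigma> \<circ> \<tau>) n"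
    by (cases n) (auto simp: psubst_ren ren_psubst comp_def intro!: psubst_cong)
qed

lemma psubst_psubst: "psubst \<sigma> (psubst \<tau> t) = psubst (psubst \<sigma> \<circ> \<tau>) t"
  by (induction t arbitrary: \<sigma> \<tau>) (auto simp: up_comp)

lemma up_Var_comp: "up (\<lambda>a. Var (f a)) = (\<lambda>a. Var (liftf f a))"
  by (auto simp: fun_eq_iff up_def liftf_def split: nat.splits)

lemma ren_psubst_Var: "ren f t = psubst (\<lambda>a. Var (f a)) t"
  by (induction t arbitrary: f) (simp_all add: up_Var_comp)

lemma up_Var: "up Var = Var" by (auto simp: fun_eq_iff up_def split: nat.splits)

lemma psubst_Var: "psubst Var t = t"
  by (induction t) (simp_all add: up_Var)

lemma ren_id: "ren id t = t"
  using psubst_Var[of t] by (simp add: ren_psubst_Var)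

lemma fv_ren: "fv (ren f t) = f ` fv t"
proof (induction t arbitrary: f)
  case (Lam t)
  have "{n. Suc n \<in> liftf f ` fv t} = f ` {n. Suc n \<in> fv t}"
  proof (rule set_eqI, rule iffI)
    fix n assume "n \<in> {n. Suc n \<in> liftf f ` fv t}"
    then obtain i where i: "i \<in> fv t" "Suc n = liftf f i" by auto
    then show "n \<in> f ` {n. Suc n \<in> fv t}" by (cases i) auto
  next
    fix n assume "n \<in> f ` {n. Suc n \<in> fv t}"
    then obtain j where "Suc j \<in> fv t" "n = f j" by auto
    then have "Suc n = liftf f (Suc j)" "Suc j \<in> fv t" by auto
    then show "n \<in> {n. Suc n \<in> liftf f ` fv t}" by blast
  qed
  then show ?case using Lam by simp
qed auto

lemma fv_psubst: "fv (psubst \<sigma> t) = (\<Union>i\<in>fv t. fv (\<sigma> i))"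
proof (induction t arbitrary: \<sigma>)
  case (Lam t)
  have "{n. Suc n \<in> (\<Union>i\<in>fv t. fv (up \<sigma> i))} = (\<Union>i\<in>{n. Suc n \<in> fv t}. fv (\<sigma> i))"
  proof (rule set_eqI, rule iffI)
    fix n assume "n \<in> {n. Suc n \<in> (\<Union>i\<in>fv t. fv (up \<sigma> i))}"
    then obtain i where i: "i \<in> fv t" "Suc n \<in> fv (up \<sigma> i)" by auto
    then show "n \<in> (\<Union>i\<in>{n. Suc n \<in> fv t}. fv (\<sigma> i))" by (cases i) (auto simp: fv_ren)
  next
    fix n assume "n \<in> (\<Union>i\<in>{n. Suc n \<in> fv t}. fv (\<sigma> i))"
    then obtain j where "Suc j \<in> fv t" "n \<in> fv (\<sigma> j)" by auto
    then have "Suc n \<in> fv (up \<sigma> (Suc j))" "Suc j \<in> fv t" by (auto simp: fv_ren)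
    then show "n \<in> {n. Suc n \<in> (\<Union>i\<in>fv t. fv (up \<sigma> i))}" by blast
  qed
  then show ?case using Lam by simp
qed auto

lemma finite_fv: "finite (fv t)"
proof (induction t)
  case (Lam t)
  have "{n. Suc n \<in> fv t} \<subseteq> (\<lambda>n. n - 1) ` fv t" by force
  then have "finite {n. Suc n \<in> fv t}" using Lam by (meson finite_imageI finite_subset)
  then show ?case by simp
qed auto

definition lk :: "nat \<Rightarrow> nat \<Rightarrow> nat" where "lk k i = (if i < k then i else Suc i)"

lemma lift_ren: "lift k t = ren (lk k) t"
proof (induction t arbitrary: k)
  case (Lam t)
  have "liftf (lk k) = lk (Suc k)" by (auto simp: fun_eq_iff lk_def liftf_def split: nat.splits)
  then show ?case using Lam by simp
qed (auto simp: lk_def)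

lemma lk_0[simp]: "lk 0 = Suc" by (simp add: fun_eq_iff lk_def)

definition ss :: "nat \<Rightarrow> ('b,'c) trm \<Rightarrow> nat \<Rightarrow> ('b,'c) trm" where
  "ss k s i = (if i < k then Var i else if i = k then s else Var (i - 1))"

lemma subst_psubst: "subst t k s = psubst (ss k s) t"
proof (induction t arbitrary: k s)
  case (Lam t)
  have "up (ss k s) = ss (Suc k) (lift 0 s)"
    by (auto simp: fun_eq_iff up_def ss_def lift_ren lk_def split: nat.splits)
  then show ?case using Lam by simp
qed (auto simp: ss_def)

lemma closed_psubst: "fv t = {} \<Longrightarrow> psubst \<sigma> t = t"
  using psubst_cong[of t \<sigma> Var] psubst_Var[of t] by simp

lemma closed_ren: "fv t = {} \<Longrightarrow> ren f t = t"
  by (simp add: ren_psubst_Var closed_psubst)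

lemma fv_HT[simp]: "fv HT = {}" "fv FT = {}" "fv KT = {}" "fv LT = {}" "fv XiT = {}"
  by (auto simp: HT_def FT_def KT_def LT_def XiT_def)

lemma beta_eta_psubst: "beta_eta s s' \<Longrightarrow> beta_eta (psubst \<sigma> s) (psubst \<sigma> s')"
proof (induction arbitrary: \<sigma> rule: beta_eta.induct)
  case (beta s t)
  have "psubst \<sigma> (subst s 0 t) = subst (psubst (up \<sigma>) s) 0 (psubst \<sigma> t)"
    unfolding subst_psubst psubst_psubst
    by (rule psubst_cong) (auto simp: ss_def up_def psubst_ren comp_def psubst_Var split: nat.splits)
  then show ?case by (simp add: beta_eta.beta)
next
  case (eta s)
  have "psubst (up \<sigma>) (lift 0 s) = lift 0 (psubst \<sigma> s)"
    unfolding lift_ren psubst_ren ren_psubst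
    by (rule psubst_cong) (auto simp: lk_def)
  then show ?case using beta_eta.eta[of "psubst \<sigma> s"] by simp
qed (auto intro: beta_eta.intros)

lemma beq_refl[simp]: "beq t t" by (simp add: beq_def)
lemma beq_sym: "beq s t \<Longrightarrow> beq t s" by (simp add: beq_def equivclp_sym)
lemma beq_trans: "beq s t \<Longrightarrow> beq t u \<Longrightarrow> beq s u" unfolding beq_def by (rule equivclp_trans)
lemma beq_step: "beta_eta s t \<Longrightarrow> beq s t" by (auto simp: beq_def)

lemma beq_map:
  assumes "\<And>a b. beta_eta a b \<Longrightarrow> beta_eta (h a) (h b)" and "beq s t"
  shows "beq (h s) (h t)"
  using assms(2) unfolding beq_def
proof (induction rule: equivclp_induct)
  case base then show ?case by simp
next
  case (step y z)
  then show ?case using assms(1) by (meson equivclp_into_equivclp)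
qed

lemma beq_psubst: "beq s t \<Longrightarrow> beq (psubst \<sigma> s) (psubst \<sigma> t)"
  by (rule beq_map[OF beta_eta_psubst])
lemma beq_ren: "beq s t \<Longrightarrow> beq (ren f s) (ren f t)"
  by (simp add: ren_psubst_Var beq_psubst)
lemma beq_AppL: "beq s s' \<Longrightarrow> beq (App s t) (App s' t)"
  by (rule beq_map[where h="\<lambda>x. App x t"]) (auto intro: beta_eta.intros)
lemma beq_AppR: "beq t t' \<Longrightarrow> beq (App s t) (App s t')"
  by (rule beq_map[where h="\<lambda>x. App s x"]) (auto intro: beta_eta.intros)
lemma beq_App: "beq s s' \<Longrightarrow> beq t t' \<Longrightarrow> beq (App s t) (App s' t')"
  by (meson beq_AppL beq_AppR beq_trans)
lemma beq_Lam: "beq s s' \<Longrightarrow> beq (Lam s) (Lam s')"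
  by (rule beq_map[where h="Lam"]) (auto intro: beta_eta.intros)



fun apps :: "('d \<Rightarrow> 'd \<Rightarrow> 'd) \<Rightarrow> 'd \<Rightarrow> 'd list \<Rightarrow> 'd" where
  "apps ap d [] = d"
| "apps ap d (x # xs) = apps ap (ap d x) xs"

fun prep :: "'d list \<Rightarrow> (nat \<Rightarrow> 'd) \<Rightarrow> nat \<Rightarrow> 'd" where
  "prep [] u = u"
| "prep (x # xs) u = prep xs (scons x u)"

lemma scons_simps[simp]: "scons d u 0 = d" "scons d u (Suc n) = u n"
  by (simp_all add: scons_def)

lemma apps_append: "apps ap d (ds @ [x]) = ap (apps ap d ds) x"
  by (induction ds arbitrary: d) auto

lemma prep_append: "prep (ds @ [x]) u = scons x (prep ds u)"
  by (induction ds arbitrary: u) auto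

lemma prep_ge: "length ds \<le> i \<Longrightarrow> prep ds u i = u (i - length ds)"
proof (induction ds arbitrary: u i)
  case (Cons x ds)
  then have "prep ds (scons x u) i = scons x u (i - length ds)" by simp
  moreover have "i - length ds = Suc (i - length (x # ds))" using Cons.prems by simp
  ultimately show ?case by simp
qed simp

lemma prep_lt: "i < length ds \<Longrightarrow> prep ds u i = prep ds u' i"
proof (induction ds arbitrary: u u' i rule: rev_induct)
  case (snoc x ds)
  show ?case
  proof (cases i)
    case (Suc j)
    then have "j < length ds" using snoc.prems by simp
    then have "prep ds u j = prep ds u' j" by (rule snoc.IH)
    then show ?thesis using Suc by (simp add: prep_append)
  qed (simp add: prep_append)
qed simp

lemma scons_comp_liftf: "scons d u \<circ> liftf f = scons d (u \<circ> f)"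
  by (auto simp: fun_eq_iff scons_def liftf_def split: nat.splits)

declare eval.simps(4)[simp del]

locale ca =
  fixes C :: "'d set" and ap :: "'d \<Rightarrow> 'd \<Rightarrow> 'd" and S K :: 'd and I :: "('b,'c) const \<Rightarrow> 'd"
  assumes ca: "comb_alg C ap S K" and ext: "extensional_ca C ap" and IC: "\<And>c. I c \<in> C"
begin

abbreviation ev where "ev u t \<equiv> eval C ap I u t"

lemma SC: "S \<in> C" and KC: "K \<in> C" and apC: "X \<in> C \<Longrightarrow> Y \<in> C \<Longrightarrow> ap X Y \<in> C"
  and Sap: "X \<in> C \<Longrightarrow> Y \<in> C \<Longrightarrow> Z \<in> C \<Longrightarrow> ap (ap (ap S X) Y) Z = ap (ap X Z) (ap Y Z)"
  and Kap: "X \<in> C \<Longrightarrow> Y \<in> C \<Longrightarrow> ap (ap K X) Y = X"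
  using ca unfolding comb_alg_def by auto

lemma ext': "M1 \<in> C \<Longrightarrow> M2 \<in> C \<Longrightarrow> (\<And>X. X \<in> C \<Longrightarrow> ap M1 X = ap M2 X) \<Longrightarrow> M1 = M2"
  using ext unfolding extensional_ca_def by blast

lemma apps_C: "d \<in> C \<Longrightarrow> set ds \<subseteq> C \<Longrightarrow> apps ap d ds \<in> C"
  by (induction ds arbitrary: d) (auto simp: apC)

lemma eval_Lam_eq:
  assumes eC: "e \<in> C" and eq: "\<And>d'. d' \<in> C \<Longrightarrow> ap e d' = ev (scons d' u) t"
  shows "ev u (Lam t) = e"
proof -
  have "(THE d. d \<in> C \<and> (\<forall>d'\<in>C. ap d d' = ev (scons d' u) t)) = e"
  proof (rule the_equality)
    show "e \<in> C \<and> (\<forall>d'\<in>C. ap e d' = ev (scons d' u) t)" using eC eq by blast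
  next
    fix d assume d: "d \<in> C \<and> (\<forall>d'\<in>C. ap d d' = ev (scons d' u) t)"
    show "d = e"
    proof (rule ext')
      show "d \<in> C" using d by blast
      show "e \<in> C" by (rule eC)
      fix X assume "X \<in> C" then show "ap d X = ap e X" using d eq by metis
    qed
  qed
  then show ?thesis by (simp add: eval.simps(4))
qed

definition Ic where "Ic = ap (ap S K) K"

lemma IcC: "Ic \<in> C"
  unfolding Ic_def using SC KC by (intro apC)

lemma Ic_ap: "c \<in> C \<Longrightarrow> ap Ic c = c"
proof -
  assume c: "c \<in> C"
  have "ap Ic c = ap (ap K c) (ap K c)" unfolding Ic_def using Sap[OF KC KC c] .
  also have "\<dots> = c" using Kap[OF c apC[OF KC c]] .
  finally show ?thesis .
qed

lemma kappa': "\<exists>e\<in>C. \<forall>c\<in>C. \<forall>ds. length ds = k \<longrightarrow> set ds \<subseteq> C \<longrightarrow> apps ap (ap e c) ds = c"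
proof (induction k)
  case 0 then show ?case using IcC Ic_ap by auto
next
  case (Suc k)
  then obtain e where e: "e \<in> C" "\<forall>c\<in>C. \<forall>ds. length ds = k \<longrightarrow> set ds \<subseteq> C \<longrightarrow> apps ap (ap e c) ds = c"
    by blast
  define e' where "e' = ap (ap S (ap K K)) e"
  have e'C: "e' \<in> C" using e KC SC by (simp add: e'_def apC)
  have "ap e' c = ap K (ap e c)" if "c \<in> C" for c
    using that e KC SC by (simp add: e'_def Sap Kap apC)
  then have "\<forall>c\<in>C. \<forall>ds. length ds = Suc k \<longrightarrow> set ds \<subseteq> C \<longrightarrow> apps ap (ap e' c) ds = c"
    using e KC by (auto simp: length_Suc_conv Kap apC)
  then show ?case using e'C by blast
qed

lemma const_rep: "c \<in> C \<Longrightarrow> \<exists>e\<in>C. \<forall>ds. length ds = k \<longrightarrow> set ds \<subseteq> C \<longrightarrow> apps ap e ds = c"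
  using kappa'[of k] by (meson apC)

lemma sigma: "\<exists>s\<in>C. \<forall>a\<in>C. \<forall>b\<in>C. \<forall>ds. length ds = k \<longrightarrow> set ds \<subseteq> C \<longrightarrow>
   apps ap (ap (ap s a) b) ds = ap (apps ap a ds) (apps ap b ds)"
proof (induction k)
  case 0 then show ?case using IcC Ic_ap by (auto intro!: bexI[of _ Ic])
next
  case (Suc k)
  then obtain s where s: "s \<in> C" "\<forall>a\<in>C. \<forall>b\<in>C. \<forall>ds. length ds = k \<longrightarrow> set ds \<subseteq> C \<longrightarrow>
   apps ap (ap (ap s a) b) ds = ap (apps ap a ds) (apps ap b ds)" by blast
  define s' where "s' = ap (ap S (ap K S)) (ap S (ap K s))"
  have s'C: "s' \<in> C" using s KC SC by (simp add: s'_def apC)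
  have key: "ap (ap (ap s' a) b) d = ap (ap s (ap a d)) (ap b d)" if "a \<in> C" "b \<in> C" "d \<in> C" for a b d
  proof -
    have "ap s' a = ap S (ap (ap S (ap K s)) a)"
      using that s KC SC by (simp add: s'_def Sap Kap apC)
    then have "ap (ap (ap s' a) b) d = ap (ap (ap (ap S (ap K s)) a) d) (ap b d)"
      using that s KC SC by (simp add: Sap apC)
    also have "\<dots> = ap (ap s (ap a d)) (ap b d)"
      using that s KC SC by (simp add: Sap Kap apC)
    finally show ?thesis .
  qed
  have "\<forall>a\<in>C. \<forall>b\<in>C. \<forall>ds. length ds = Suc k \<longrightarrow> set ds \<subseteq> C \<longrightarrow>
   apps ap (ap (ap s' a) b) ds = ap (apps ap a ds) (apps ap b ds)"
  proof (intro ballI allI impI)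
    fix a b ds assume ab: "a \<in> C" "b \<in> C" and ds: "length ds = Suc k" "set ds \<subseteq> C"
    then obtain d ds' where dd: "ds = d # ds'" "length ds' = k" by (auto simp: length_Suc_conv)
    have dC: "d \<in> C" "set ds' \<subseteq> C" using ds dd by auto
    show "apps ap (ap (ap s' a) b) ds = ap (apps ap a ds) (apps ap b ds)"
      using dd dC ab s key by (simp add: apC)
  qed
  then show ?case using s'C by blast
qed

lemma proj: "i < k \<Longrightarrow> \<exists>e\<in>C. \<forall>ds u. length ds = k \<longrightarrow> set ds \<subseteq> C \<longrightarrow> apps ap e ds = prep ds u i"
proof (induction k)
  case 0 then show ?case by simp
next
  case (Suc k)
  show ?case
  proof (cases "i = k")
    case True
    obtain e where e: "e \<in> C" "\<forall>c\<in>C. \<forall>ds. length ds = k \<longrightarrow> set ds \<subseteq> C \<longrightarrow> apps ap (ap e c) ds = c"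
      using kappa'[of k] by blast
    have "\<forall>ds u. length ds = Suc k \<longrightarrow> set ds \<subseteq> C \<longrightarrow> apps ap e ds = prep ds u i"
    proof (intro allI impI)
      fix ds u assume ds: "length ds = Suc k" "set ds \<subseteq> C"
      then obtain d ds' where dd: "ds = d # ds'" "length ds' = k" by (auto simp: length_Suc_conv)
      then show "apps ap e ds = prep ds u i" using ds e True by (simp add: prep_ge)
    qed
    then show ?thesis using e by blast
  next
    case False
    then have "i < k" using Suc by simp
    then obtain e where e: "e \<in> C" "\<forall>ds u. length ds = k \<longrightarrow> set ds \<subseteq> C \<longrightarrow> apps ap e ds = prep ds u i"
      using Suc.IH by blast
    have "\<forall>ds u. length ds = Suc k \<longrightarrow> set ds \<subseteq> C \<longrightarrow> apps ap (ap K e) ds = prep ds u i"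
    proof (intro allI impI)
      fix ds u assume ds: "length ds = Suc k" "set ds \<subseteq> C"
      then obtain d ds' where dd: "ds = d # ds'" "length ds' = k" by (auto simp: length_Suc_conv)
      then show "apps ap (ap K e) ds = prep ds u i" using ds e by (simp add: Kap)
    qed
    then show ?thesis using e KC by (meson apC)
  qed
qed

lemma rep: "(\<And>n. u n \<in> C) \<Longrightarrow>
  \<exists>d\<in>C. \<forall>ds. length ds = k \<longrightarrow> set ds \<subseteq> C \<longrightarrow> apps ap d ds = ev (prep ds u) t"
proof (induction t arbitrary: k)
  case (Var i)
  show ?case
  proof (cases "i < k")
    case True
    then show ?thesis using proj[of i k] by auto
  next
    case False
    obtain e where "e \<in> C" "\<forall>ds. length ds = k \<longrightarrow> set ds \<subseteq> C \<longrightarrow> apps ap e ds = u (i - k)"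
      using const_rep[OF Var.prems] by blast
    then show ?thesis using False by (auto simp: prep_ge)
  qed
next
  case (Cst c)
  then show ?case using const_rep[OF IC] by simp
next
  case (App s t)
  obtain a where a: "a \<in> C" "\<forall>ds. length ds = k \<longrightarrow> set ds \<subseteq> C \<longrightarrow> apps ap a ds = ev (prep ds u) s"
    using App.IH(1)[OF App.prems] by blast
  obtain b where b: "b \<in> C" "\<forall>ds. length ds = k \<longrightarrow> set ds \<subseteq> C \<longrightarrow> apps ap b ds = ev (prep ds u) t"
    using App.IH(2)[OF App.prems] by blast
  obtain s0 where s0: "s0 \<in> C" "\<forall>a\<in>C. \<forall>b\<in>C. \<forall>ds. length ds = k \<longrightarrow> set ds \<subseteq> C \<longrightarrow>
   apps ap (ap (ap s0 a) b) ds = ap (apps ap a ds) (apps ap b ds)" using sigma by blast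
  show ?case using a b s0 by (intro bexI[of _ "ap (ap s0 a) b"]) (auto simp: apC)
next
  case (Lam t)
  obtain d where d: "d \<in> C" "\<forall>ds. length ds = Suc k \<longrightarrow> set ds \<subseteq> C \<longrightarrow> apps ap d ds = ev (prep ds u) t"
    using Lam.IH[OF Lam.prems] by blast
  have "\<forall>ds. length ds = k \<longrightarrow> set ds \<subseteq> C \<longrightarrow> apps ap d ds = ev (prep ds u) (Lam t)"
  proof (intro allI impI)
    fix ds assume ds: "length ds = k" "set ds \<subseteq> C"
    show "apps ap d ds = ev (prep ds u) (Lam t)"
    proof (rule sym, rule eval_Lam_eq)
      show "apps ap d ds \<in> C" using d ds by (simp add: apps_C)
      fix d' assume "d' \<in> C"
      then show "ap (apps ap d ds) d' = ev (scons d' (prep ds u)) t"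
        using d ds by (metis apps_append prep_append length_append_singleton set_append
           Un_subset_iff empty_subsetI insert_subset list.set)
    qed
  qed
  then show ?case using d by blast
qed

lemma ev_C: "(\<And>n. u n \<in> C) \<Longrightarrow> ev u t \<in> C"
  using rep[where u=u and k=0 and t=t] by auto

lemma ev_Lam: "(\<And>n. u n \<in> C) \<Longrightarrow> d' \<in> C \<Longrightarrow> ap (ev u (Lam t)) d' = ev (scons d' u) t"
proof -
  assume u: "\<And>n. u n \<in> C" and d': "d' \<in> C"
  obtain d where d: "d \<in> C" "\<forall>ds. length ds = 1 \<longrightarrow> set ds \<subseteq> C \<longrightarrow> apps ap d ds = ev (prep ds u) t"
    using rep[where u=u and k=1 and t=t] u by blast
  have dd: "ap d x = ev (scons x u) t" if "x \<in> C" for x using d(2)[rule_format, of "[x]"] that by simp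
  have "ev u (Lam t) = d" by (rule eval_Lam_eq) (use d dd in auto)
  then show ?thesis using dd d' by simp
qed

lemma scons_C: "d \<in> C \<Longrightarrow> (\<And>n. u n \<in> C) \<Longrightarrow> scons d u n \<in> C"
  by (cases n) auto

lemma ev_ren: "(\<And>n. u n \<in> C) \<Longrightarrow> ev u (ren f t) = ev (u \<circ> f) t"
proof (induction t arbitrary: u f)
  case (Lam t)
  have uf: "\<And>n. (u \<circ> f) n \<in> C" using Lam.prems by simp
  show ?case unfolding ren.simps
  proof (rule eval_Lam_eq)
    show "ev (u \<circ> f) (Lam t) \<in> C" by (rule ev_C) (rule uf)
    fix d' assume d': "d' \<in> C"
    have sC: "\<And>n. scons d' u n \<in> C" using scons_C[OF d' Lam.prems] .
    have "ev (scons d' u) (ren (liftf f) t) = ev (scons d' u \<circ> liftf f) t"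
      using Lam.IH[where u="scons d' u" and f="liftf f"] sC by blast
    moreover have "ap (ev (u \<circ> f) (Lam t)) d' = ev (scons d' (u \<circ> f)) t" by (rule ev_Lam[OF uf d'])
    ultimately show "ap (ev (u \<circ> f) (Lam t)) d' = ev (scons d' u) (ren (liftf f) t)"
      by (simp add: scons_comp_liftf)
  qed
qed auto

lemma ev_psubst: "(\<And>n. u n \<in> C) \<Longrightarrow> ev u (psubst \<sigma> t) = ev (\<lambda>n. ev u (\<sigma> n)) t"
proof (induction t arbitrary: u \<sigma>)
  case (Lam t)
  have uf: "\<And>n. ev u (\<sigma> n) \<in> C" using Lam.prems ev_C by blast
  show ?case unfolding psubst.simps
  proof (rule eval_Lam_eq)
    show "ev (\<lambda>n. ev u (\<sigma> n)) (Lam t) \<in> C" by (rule ev_C) (rule uf)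
    fix d' assume d': "d' \<in> C"
    have sC: "\<And>n. scons d' u n \<in> C" using scons_C[OF d' Lam.prems] .
    have "ev (scons d' u) (psubst (up \<sigma>) t) = ev (\<lambda>n. ev (scons d' u) (up \<sigma> n)) t"
      using Lam.IH[where u="scons d' u" and \<sigma>="up \<sigma>"] sC by blast
    also have "(\<lambda>n. ev (scons d' u) (up \<sigma> n)) = scons d' (\<lambda>n. ev u (\<sigma> n))"
    proof
      fix n show "ev (scons d' u) (up \<sigma> n) = scons d' (\<lambda>n. ev u (\<sigma> n)) n"
        by (cases n) (auto simp: ev_ren[OF sC] comp_def)
    qed
    finally show "ap (ev (\<lambda>n. ev u (\<sigma> n)) (Lam t)) d' = ev (scons d' u) (psubst (up \<sigma>) t)"
      using ev_Lam[OF uf d'] by simp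
  qed
qed auto

lemma ev_cong: "(\<And>n. u n \<in> C) \<Longrightarrow> (\<And>n. u' n \<in> C) \<Longrightarrow> (\<And>n. n \<in> fv t \<Longrightarrow> u n = u' n)
   \<Longrightarrow> ev u t = ev u' t"
proof (induction t arbitrary: u u')
  case (Lam t)
  show ?case
  proof (rule eval_Lam_eq)
    show "ev u' (Lam t) \<in> C" by (rule ev_C) (rule Lam.prems(2))
    fix d' assume d': "d' \<in> C"
    have "ev (scons d' u) t = ev (scons d' u') t"
    proof (rule Lam.IH)
      show "scons d' u n \<in> C" "scons d' u' n \<in> C" for n using scons_C d' Lam.prems by auto
      fix n assume "n \<in> fv t" then show "scons d' u n = scons d' u' n"
        using Lam.prems(3) by (cases n) auto
    qed
    then show "ap (ev u' (Lam t)) d' = ev (scons d' u) t" using ev_Lam[OF Lam.prems(2) d'] by simp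
  qed
next
  case (App s t)
  have "ev u s = ev u' s" by (rule App.IH(1)) (use App.prems in auto)
  moreover have "ev u t = ev u' t" by (rule App.IH(2)) (use App.prems in auto)
  ultimately show ?case by simp
qed auto

end


context ca begin

lemma ev_beta_eta: "beta_eta s s' \<Longrightarrow> (\<And>n. u n \<in> C) \<Longrightarrow> ev u s = ev u s'"
proof (induction arbitrary: u rule: beta_eta.induct)
  case (beta s t)
  have tC: "ev u t \<in> C" by (rule ev_C) (rule beta.prems)
  have "ev u (subst s 0 t) = ev (\<lambda>n. ev u (ss 0 t n)) s"
    unfolding subst_psubst by (rule ev_psubst) (rule beta.prems)
  also have "(\<lambda>n. ev u (ss 0 t n)) = scons (ev u t) u"
  proof
    fix n show "ev u (ss 0 t n) = scons (ev u t) u n" by (cases n) (auto simp: ss_def)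
  qed
  finally show ?case using ev_Lam[OF beta.prems tC] by simp
next
  case (eta s)
  show ?case
  proof (rule eval_Lam_eq)
    show "ev u s \<in> C" by (rule ev_C) (rule eta.prems)
    fix d' assume d': "d' \<in> C"
    have sC: "\<And>n. scons d' u n \<in> C" using scons_C[OF d' eta.prems] .
    have "ev (scons d' u) (lift 0 s) = ev (scons d' u \<circ> Suc) s"
      unfolding lift_ren lk_0 by (rule ev_ren) (rule sC)
    also have "scons d' u \<circ> Suc = u" by (simp add: fun_eq_iff)
    finally show "ap (ev u s) d' = ev (scons d' u) (App (lift 0 s) (Var 0))" by simp
  qed
next
  case (lam s s')
  show ?case
  proof (rule eval_Lam_eq)
    show "ev u (Lam s') \<in> C" by (rule ev_C) (rule lam.prems)
    fix d' assume d': "d' \<in> C"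
    have sC: "\<And>n. scons d' u n \<in> C" using scons_C[OF d' lam.prems] .
    have "ev (scons d' u) s = ev (scons d' u) s'" by (rule lam.IH) (rule sC)
    then show "ap (ev u (Lam s')) d' = ev (scons d' u) s" using ev_Lam[OF lam.prems d'] by simp
  qed
qed simp_all

lemma ev_beq: "beq s s' \<Longrightarrow> (\<And>n. u n \<in> C) \<Longrightarrow> ev u s = ev u s'"
  unfolding beq_def
proof (induction rule: equivclp_induct)
  case base then show ?case by simp
next
  case (step y z)
  then show ?case using ev_beta_eta by metis
qed

end

locale km = ca C ap S K I for C :: "'d set" and ap S K and I :: "('b,'c) const \<Rightarrow> 'd" +
  fixes om :: bool and St :: "'s set" and le vs
  assumes kmod: "kmodel om St le C ap S K I vs"
begin

definition HV where "HV = ev (\<lambda>_. K) HT"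
definition FV where "FV = ev (\<lambda>_. K) FT"

lemma ev_HT: "(\<And>n. u n \<in> C) \<Longrightarrow> ev u HT = HV"
  unfolding HV_def by (rule ev_cong) (auto simp: KC)
lemma ev_FT: "(\<And>n. u n \<in> C) \<Longrightarrow> ev u FT = FV"
  unfolding FV_def by (rule ev_cong) (auto simp: KC)

lemma HVC: "HV \<in> C" unfolding HV_def by (rule ev_C) (rule KC)
lemma FVC: "FV \<in> C" unfolding FV_def by (rule ev_C) (rule KC)

lemma pm: "premodel St le C ap S K I vs" using kmod unfolding kmodel_def by (rule conjunct1)

lemma pm2: "\<forall>X\<in>C. vs X \<subseteq> St \<and> (\<forall>s\<in>vs X. \<forall>s'\<in>St. le s s' \<longrightarrow> s' \<in> vs X)"
  using pm unfolding premodel_def by (elim conjE)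

lemma upc: "X \<in> C \<Longrightarrow> s \<in> vs X \<Longrightarrow> s' \<in> St \<Longrightarrow> le s s' \<Longrightarrow> s' \<in> vs X"
  using pm2 by blast

lemma vsSt: "X \<in> C \<Longrightarrow> s \<in> vs X \<Longrightarrow> s \<in> St"
  using pm2 by blast

lemma conds_all: "\<forall>X\<in>C. \<forall>Y\<in>C. \<forall>s\<in>St.
        ((s \<in> vs (ap (I Lc) X) \<and>
          (\<forall>s'\<in>St. \<forall>Z\<in>C. le s s' \<and> s' \<in> vs (ap X Z) \<longrightarrow> s' \<in> vs (ap Y Z)))
           \<longrightarrow> s \<in> vs (ap (ap (I Xi) X) Y))
      \<and> (s \<in> vs (ap (ap (I Xi) X) Y) \<longrightarrow> (\<forall>Z\<in>C. s \<in> vs (ap X Z) \<longrightarrow> s \<in> vs (ap Y Z)))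
      \<and> ((s \<in> vs (ap (I Lc) X) \<and>
          (\<forall>s'\<in>St. \<forall>Z\<in>C. le s s' \<and> s' \<in> vs (ap X Z) \<longrightarrow> s' \<in> vs (ap HV (ap Y Z))))
           \<longrightarrow> s \<in> vs (ap HV (ap (ap (I Xi) X) Y)))
      \<and> (om \<longrightarrow> (s \<in> vs (ap (I Lc) X) \<and>
          (\<forall>s'\<in>St. le s s' \<and> (\<exists>Z\<in>C. s' \<in> vs (ap X Z)) \<longrightarrow> s' \<in> vs (ap (I Lc) Y)))
           \<longrightarrow> s \<in> vs (ap (I Lc) (ap (ap FV X) Y)))
      \<and> (s \<in> vs X \<longrightarrow> s \<in> vs (ap HV X))
      \<and> s \<in> vs (ap (I Lc) HV)
      \<and> (\<forall>\<tau>. s \<in> vs (ap (I Lc) (I (At \<tau>))))"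
  using kmod unfolding kmodel_def Let_def HV_def FV_def by (rule conjunct2)

lemma conds: "X \<in> C \<Longrightarrow> Y \<in> C \<Longrightarrow> s \<in> St \<Longrightarrow>
        ((s \<in> vs (ap (I Lc) X) \<and>
          (\<forall>s'\<in>St. \<forall>Z\<in>C. le s s' \<and> s' \<in> vs (ap X Z) \<longrightarrow> s' \<in> vs (ap Y Z)))
           \<longrightarrow> s \<in> vs (ap (ap (I Xi) X) Y))
      \<and> (s \<in> vs (ap (ap (I Xi) X) Y) \<longrightarrow> (\<forall>Z\<in>C. s \<in> vs (ap X Z) \<longrightarrow> s \<in> vs (ap Y Z)))
      \<and> ((s \<in> vs (ap (I Lc) X) \<and>
          (\<forall>s'\<in>St. \<forall>Z\<in>C. le s s' \<and> s' \<in> vs (ap X Z) \<longrightarrow> s' \<in> vs (ap HV (ap Y Z))))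
           \<longrightarrow> s \<in> vs (ap HV (ap (ap (I Xi) X) Y)))
      \<and> (om \<longrightarrow> (s \<in> vs (ap (I Lc) X) \<and>
          (\<forall>s'\<in>St. le s s' \<and> (\<exists>Z\<in>C. s' \<in> vs (ap X Z)) \<longrightarrow> s' \<in> vs (ap (I Lc) Y)))
           \<longrightarrow> s \<in> vs (ap (I Lc) (ap (ap FV X) Y)))
      \<and> (s \<in> vs X \<longrightarrow> s \<in> vs (ap HV X))
      \<and> s \<in> vs (ap (I Lc) HV)
      \<and> (\<forall>\<tau>. s \<in> vs (ap (I Lc) (I (At \<tau>))))"
  using bspec[OF bspec[OF bspec[OF conds_all]]] by blast

lemma c1: "X \<in> C \<Longrightarrow> Y \<in> C \<Longrightarrow> s \<in> St \<Longrightarrow> s \<in> vs (ap (I Lc) X) \<Longrightarrow>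
    (\<forall>s'\<in>St. \<forall>Z\<in>C. le s s' \<and> s' \<in> vs (ap X Z) \<longrightarrow> s' \<in> vs (ap Y Z)) \<Longrightarrow>
    s \<in> vs (ap (ap (I Xi) X) Y)"
  using conds by blast
lemma c2: "X \<in> C \<Longrightarrow> Y \<in> C \<Longrightarrow> s \<in> St \<Longrightarrow> s \<in> vs (ap (ap (I Xi) X) Y) \<Longrightarrow>
   Z \<in> C \<Longrightarrow> s \<in> vs (ap X Z) \<Longrightarrow> s \<in> vs (ap Y Z)"
  using conds by blast
lemma c3: "X \<in> C \<Longrightarrow> Y \<in> C \<Longrightarrow> s \<in> St \<Longrightarrow> s \<in> vs (ap (I Lc) X) \<Longrightarrow>
    (\<forall>s'\<in>St. \<forall>Z\<in>C. le s s' \<and> s' \<in> vs (ap X Z) \<longrightarrow> s' \<in> vs (ap HV (ap Y Z))) \<Longrightarrow>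
    s \<in> vs (ap HV (ap (ap (I Xi) X) Y))"
  using conds by blast
lemma c4: "om \<Longrightarrow> X \<in> C \<Longrightarrow> Y \<in> C \<Longrightarrow> s \<in> St \<Longrightarrow> s \<in> vs (ap (I Lc) X) \<Longrightarrow>
    (\<forall>s'\<in>St. le s s' \<and> (\<exists>Z\<in>C. s' \<in> vs (ap X Z)) \<longrightarrow> s' \<in> vs (ap (I Lc) Y)) \<Longrightarrow>
    s \<in> vs (ap (I Lc) (ap (ap FV X) Y))"
  using conds by blast
lemma c5: "X \<in> C \<Longrightarrow> s \<in> St \<Longrightarrow> s \<in> vs X \<Longrightarrow> s \<in> vs (ap HV X)"
  using conds[OF _ KC] by blast
lemma c6: "s \<in> St \<Longrightarrow> s \<in> vs (ap (I Lc) HV)"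
  using conds[OF KC KC] by blast
lemma c7: "s \<in> St \<Longrightarrow> s \<in> vs (ap (I Lc) (I (At \<tau>)))"
  using conds[OF KC KC] by blast

lemma sound:
  "derives om \<Gamma> t \<Longrightarrow> s \<in> St \<Longrightarrow> (\<And>n. u n \<in> C) \<Longrightarrow> (\<And>t'. t' \<in> \<Gamma> \<Longrightarrow> s \<in> vs (ev u t'))
   \<Longrightarrow> s \<in> vs (ev u t)"
proof (induction arbitrary: s u rule: derives.induct)
  case (ax \<Gamma> t) then show ?case by simp
next
  case (LH \<Gamma>)
  then show ?case using c6[OF LH.prems(1)] ev_HT[where u=u, OF LH.prems(2)] by (simp add: LT_def)
next
  case (LA \<Gamma> \<tau>)
  then show ?case using c7[OF LA.prems(1)] by (simp add: LT_def)
next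
  case (Eq \<Gamma> t1 t2)
  have "s \<in> vs (ev u t1)" by (rule Eq.IH[OF Eq.prems])
  then show ?case using ev_beq[OF Eq.hyps(2) Eq.prems(2)] by simp
next
  case (Hi \<Gamma> t)
  have "s \<in> vs (ev u t)" by (rule Hi.IH[OF Hi.prems])
  then show ?case using c5[OF ev_C[OF Hi.prems(2)] Hi.prems(1)] ev_HT[where u=u, OF Hi.prems(2)] by simp
next
  case (Xie \<Gamma> t1 t2 t3)
  have a: "s \<in> vs (ev u (App (App XiT t1) t2))" by (rule Xie.IH(1)[OF Xie.prems])
  have b: "s \<in> vs (ev u (App t1 t3))" by (rule Xie.IH(2)[OF Xie.prems])
  have a': "s \<in> vs (ap (ap (I Xi) (ev u t1)) (ev u t2))" using a by (simp add: XiT_def)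
  have b': "s \<in> vs (ap (ev u t1) (ev u t3))" using b by simp
  show ?case using c2[OF ev_C[OF Xie.prems(2)] ev_C[OF Xie.prems(2)] Xie.prems(1) a' ev_C[OF Xie.prems(2)] b']
    by simp
next
  case (Xii t1 x \<Gamma> t2)
  define X where "X = ev u t1"
  define Y where "Y = ev u t2"
  have XC: "X \<in> C" and YC: "Y \<in> C" unfolding X_def Y_def by (rule ev_C, rule Xii.prems)+
  have L: "s \<in> vs (ap (I Lc) X)" using Xii.IH(2)[OF Xii.prems] by (simp add: LT_def X_def)
  have "\<forall>s'\<in>St. \<forall>Z\<in>C. le s s' \<and> s' \<in> vs (ap X Z) \<longrightarrow> s' \<in> vs (ap Y Z)"
  proof (intro ballI impI)
    fix s' Z assume s': "s' \<in> St" and Z: "Z \<in> C" and h: "le s s' \<and> s' \<in> vs (ap X Z)"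
    define u' where "u' = u(x := Z)"
    have u'C: "\<And>n. u' n \<in> C" using Z Xii.prems(2) by (simp add: u'_def)
    have agree: "ev u' r = ev u r" if "x \<notin> fv r" for r
      by (rule ev_cong[OF u'C Xii.prems(2)]) (use that in \<open>auto simp: u'_def\<close>)
    have "s' \<in> vs (ev u' (App t2 (Var x)))"
    proof (rule Xii.IH(1)[OF s' u'C])
      fix t' assume "t' \<in> insert (App t1 (Var x)) \<Gamma>"
      then show "s' \<in> vs (ev u' t')"
      proof
        assume "t' = App t1 (Var x)"
        then show ?thesis using h agree Xii.hyps(3) by (simp add: u'_def X_def)
      next
        assume t': "t' \<in> \<Gamma>"
        then have "x \<notin> fv t'" using Xii.hyps(3) by (auto simp: fvs_def)
        have "s \<in> vs (ev u t')" by (rule Xii.prems(3)[OF t'])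
        then have "s' \<in> vs (ev u t')" using upc[OF ev_C[where u=u and t=t', OF Xii.prems(2)] _ s'] h by blast
        then show ?thesis using agree[OF \<open>x \<notin> fv t'\<close>] by simp
      qed
    qed
    then show "s' \<in> vs (ap Y Z)" using agree Xii.hyps(3) by (simp add: u'_def Y_def)
  qed
  then have "s \<in> vs (ap (ap (I Xi) X) Y)" by (rule c1[OF XC YC Xii.prems(1) L])
  then show ?case by (simp add: XiT_def X_def Y_def)
next
  case (XiH t1 x \<Gamma> t2)
  define X where "X = ev u t1"
  define Y where "Y = ev u t2"
  have XC: "X \<in> C" and YC: "Y \<in> C" unfolding X_def Y_def by (rule ev_C, rule XiH.prems)+
  have L: "s \<in> vs (ap (I Lc) X)" using XiH.IH(2)[OF XiH.prems] by (simp add: LT_def X_def)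
  have "\<forall>s'\<in>St. \<forall>Z\<in>C. le s s' \<and> s' \<in> vs (ap X Z) \<longrightarrow> s' \<in> vs (ap HV (ap Y Z))"
  proof (intro ballI impI)
    fix s' Z assume s': "s' \<in> St" and Z: "Z \<in> C" and h: "le s s' \<and> s' \<in> vs (ap X Z)"
    define u' where "u' = u(x := Z)"
    have u'C: "\<And>n. u' n \<in> C" using Z XiH.prems(2) by (simp add: u'_def)
    have agree: "ev u' r = ev u r" if "x \<notin> fv r" for r
      by (rule ev_cong[OF u'C XiH.prems(2)]) (use that in \<open>auto simp: u'_def\<close>)
    have "s' \<in> vs (ev u' (App HT (App t2 (Var x))))"
    proof (rule XiH.IH(1)[OF s' u'C])
      fix t' assume "t' \<in> insert (App t1 (Var x)) \<Gamma>"
      then show "s' \<in> vs (ev u' t')"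
      proof
        assume "t' = App t1 (Var x)"
        then show ?thesis using h agree XiH.hyps(3) by (simp add: u'_def X_def)
      next
        assume t': "t' \<in> \<Gamma>"
        then have "x \<notin> fv t'" using XiH.hyps(3) by (auto simp: fvs_def)
        have "s \<in> vs (ev u t')" by (rule XiH.prems(3)[OF t'])
        then have "s' \<in> vs (ev u t')" using upc[OF ev_C[where u=u and t=t', OF XiH.prems(2)] _ s'] h by blast
        then show ?thesis using agree[OF \<open>x \<notin> fv t'\<close>] by simp
      qed
    qed
    moreover have "ev u' HT = HV" by (rule ev_HT) (rule u'C)
    ultimately show "s' \<in> vs (ap HV (ap Y Z))" using agree XiH.hyps(3) by (simp add: u'_def Y_def)
  qed
  then have "s \<in> vs (ap HV (ap (ap (I Xi) X) Y))" by (rule c3[OF XC YC XiH.prems(1) L])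
  then show ?case using ev_HT[where u=u, OF XiH.prems(2)] by (simp add: XiT_def X_def Y_def)
next
  case (FL t1 x \<Gamma> t2)
  define X where "X = ev u t1"
  define Y where "Y = ev u t2"
  have XC: "X \<in> C" and YC: "Y \<in> C" unfolding X_def Y_def by (rule ev_C, rule FL.prems)+
  have L: "s \<in> vs (ap (I Lc) X)" using FL.IH(2)[OF FL.prems] by (simp add: LT_def X_def)
  have "\<forall>s'\<in>St. le s s' \<and> (\<exists>Z\<in>C. s' \<in> vs (ap X Z)) \<longrightarrow> s' \<in> vs (ap (I Lc) Y)"
  proof (intro ballI impI)
    fix s' assume s': "s' \<in> St" and h0: "le s s' \<and> (\<exists>Z\<in>C. s' \<in> vs (ap X Z))"
    then obtain Z where Z: "Z \<in> C" and h: "le s s' \<and> s' \<in> vs (ap X Z)" by blast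
    define u' where "u' = u(x := Z)"
    have u'C: "\<And>n. u' n \<in> C" using Z FL.prems(2) by (simp add: u'_def)
    have agree: "ev u' r = ev u r" if "x \<notin> fv r" for r
      by (rule ev_cong[OF u'C FL.prems(2)]) (use that in \<open>auto simp: u'_def\<close>)
    have "s' \<in> vs (ev u' (App LT t2))"
    proof (rule FL.IH(1)[OF s' u'C])
      fix t' assume "t' \<in> insert (App t1 (Var x)) \<Gamma>"
      then show "s' \<in> vs (ev u' t')"
      proof
        assume "t' = App t1 (Var x)"
        then show ?thesis using h agree FL.hyps(4) by (simp add: u'_def X_def)
      next
        assume t': "t' \<in> \<Gamma>"
        then have "x \<notin> fv t'" using FL.hyps(4) by (auto simp: fvs_def)
        have "s \<in> vs (ev u t')" by (rule FL.prems(3)[OF t'])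
        then have "s' \<in> vs (ev u t')" using upc[OF ev_C[where u=u and t=t', OF FL.prems(2)] _ s'] h by blast
        then show ?thesis using agree[OF \<open>x \<notin> fv t'\<close>] by simp
      qed
    qed
    then show "s' \<in> vs (ap (I Lc) Y)" using agree FL.hyps(4) by (simp add: u'_def Y_def LT_def)
  qed
  then have "s \<in> vs (ap (I Lc) (ap (ap FV X) Y))" by (rule c4[OF FL.hyps(1) XC YC FL.prems(1) L])
  then show ?case using ev_FT[where u=u, OF FL.prems(2)] by (simp add: LT_def X_def Y_def)
qed

end

lemma kmodel_km: "kmodel om St le C ap S K I vs \<Longrightarrow> km C ap S K I om St le vs"
  unfolding km_def ca_def km_axioms_def kmodel_def premodel_def by blast

lemma soundness:
  assumes "provable om \<Gamma> t" shows "valid_at TYPE('d) TYPE('s) om \<Gamma> t"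
  unfolding valid_at_def
proof (intro allI impI ballI)
  fix St :: "'s set" and le and C :: "'d set" and ap S K I vs s u
  assume km: "kmodel om St le C ap S K I vs" and s: "s \<in> St" and u: "\<forall>n. u n \<in> C"
    and G: "\<forall>t'\<in>\<Gamma>. s \<in> vs (eval C ap I u t')"
  interpret km C ap S K I om St le vs using kmodel_km[OF km] .
  obtain \<Gamma>' where "\<Gamma>' \<subseteq> \<Gamma>" "derives om \<Gamma>' t" using assms unfolding provable_def by blast
  then show "s \<in> vs (eval C ap I u t)" using sound[OF _ s] u G by blast
qed



lemma finite_fvs: "finite \<Gamma> \<Longrightarrow> finite (fvs \<Gamma>)"
  by (simp add: fvs_def finite_fv)

lemma fvs_insert[simp]: "fvs (insert a \<Gamma>) = fv a \<union> fvs \<Gamma>"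
  by (simp add: fvs_def)

lemma fvs_mono: "\<Gamma> \<subseteq> \<Delta> \<Longrightarrow> fvs \<Gamma> \<subseteq> fvs \<Delta>"
  by (auto simp: fvs_def)

lemma ren_closed_consts[simp]: "ren f HT = HT" "ren f FT = FT" "ren f LT = LT" "ren f XiT = XiT"
  by (simp_all add: closed_ren)

lemma fresh: "finite A \<Longrightarrow> \<exists>y::nat. y \<notin> A"
  using ex_new_if_finite[OF infinite_UNIV_nat] .

lemma derives_ren:
  "derives om \<Gamma> t \<Longrightarrow> finite \<Gamma>' \<Longrightarrow> ren f ` \<Gamma> \<subseteq> \<Gamma>' \<Longrightarrow> derives om \<Gamma>' (ren f t)"
proof (induction arbitrary: f \<Gamma>' rule: derives.induct)
  case (ax \<Gamma> t)
  then have "ren f t \<in> \<Gamma>'" by auto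
  then have e: "insert (ren f t) \<Gamma>' = \<Gamma>'" by (rule insert_absorb)
  have "derives om (insert (ren f t) \<Gamma>') (ren f t)" by (rule derives.ax[OF ax.prems(1)])
  then show ?case by (simp only: e)
next
  case (LH \<Gamma>)
  have "derives om \<Gamma>' (App LT HT)" by (rule derives.LH[OF LH.prems(1)])
  then show ?case by simp
next
  case (LA \<Gamma> \<tau>)
  have "derives om \<Gamma>' (App LT (Cst (At \<tau>)))" by (rule derives.LA[OF LA.prems(1)])
  then show ?case by simp
next
  case (Eq \<Gamma> t1 t2)
  have "derives om \<Gamma>' (ren f t1)" by (rule Eq.IH[OF Eq.prems])
  then show ?case using derives.Eq beq_ren[OF Eq.hyps(2)] by blast
next
  case (Hi \<Gamma> t)
  have "derives om \<Gamma>' (ren f t)" by (rule Hi.IH[OF Hi.prems])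
  then show ?case using derives.Hi by simp
next
  case (Xie \<Gamma> t1 t2 t3)
  have a: "derives om \<Gamma>' (App (App XiT (ren f t1)) (ren f t2))" using Xie.IH(1)[OF Xie.prems] by simp
  have b: "derives om \<Gamma>' (App (ren f t1) (ren f t3))" using Xie.IH(2)[OF Xie.prems] by simp
  show ?case using derives.Xie[OF a b] by simp
next
  case (Xii t1 x \<Gamma> t2)
  obtain y where y: "y \<notin> fvs \<Gamma>' \<union> fv (ren f t1) \<union> fv (ren f t2)"
    using fresh[of "fvs \<Gamma>' \<union> fv (ren f t1) \<union> fv (ren f t2)"] finite_fvs[OF Xii.prems(1)] finite_fv by auto
  define f' where "f' = f(x := y)"
  have rr: "ren f' r = ren f r" if "x \<notin> fv r" for r
    by (rule ren_cong) (use that in \<open>auto simp: f'_def\<close>)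
  have fx: "f' x = y" by (simp add: f'_def)
  have sub: "ren f' ` insert (App t1 (Var x)) \<Gamma> \<subseteq> insert (App (ren f t1) (Var y)) \<Gamma>'"
  proof
    fix a assume "a \<in> ren f' ` insert (App t1 (Var x)) \<Gamma>"
    then obtain r where r: "r \<in> insert (App t1 (Var x)) \<Gamma>" "a = ren f' r" by blast
    show "a \<in> insert (App (ren f t1) (Var y)) \<Gamma>'"
    proof (cases "r = App t1 (Var x)")
      case True then show ?thesis using r rr[of t1] Xii.hyps(3) by (simp add: f'_def)
    next
      case False
      then have "r \<in> \<Gamma>" using r by simp
      then have "x \<notin> fv r" using Xii.hyps(3) by (auto simp: fvs_def)
      then show ?thesis using r rr \<open>r \<in> \<Gamma>\<close> Xii.prems(2) by auto
    qed
  qed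
  have a: "derives om (insert (App (ren f t1) (Var y)) \<Gamma>') (App (ren f t2) (Var y))"
    using Xii.IH(1)[OF _ sub] Xii.prems(1) rr[of t2] Xii.hyps(3) fx by simp
  have b: "derives om \<Gamma>' (App LT (ren f t1))" using Xii.IH(2)[OF Xii.prems] by simp
  show ?case using derives.Xii[OF a b] y by simp
next
  case (XiH t1 x \<Gamma> t2)
  obtain y where y: "y \<notin> fvs \<Gamma>' \<union> fv (ren f t1) \<union> fv (ren f t2)"
    using fresh[of "fvs \<Gamma>' \<union> fv (ren f t1) \<union> fv (ren f t2)"] finite_fvs[OF XiH.prems(1)] finite_fv by auto
  define f' where "f' = f(x := y)"
  have rr: "ren f' r = ren f r" if "x \<notin> fv r" for r
    by (rule ren_cong) (use that in \<open>auto simp: f'_def\<close>)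
  have fx: "f' x = y" by (simp add: f'_def)
  have sub: "ren f' ` insert (App t1 (Var x)) \<Gamma> \<subseteq> insert (App (ren f t1) (Var y)) \<Gamma>'"
  proof
    fix a assume "a \<in> ren f' ` insert (App t1 (Var x)) \<Gamma>"
    then obtain r where r: "r \<in> insert (App t1 (Var x)) \<Gamma>" "a = ren f' r" by blast
    show "a \<in> insert (App (ren f t1) (Var y)) \<Gamma>'"
    proof (cases "r = App t1 (Var x)")
      case True then show ?thesis using r rr[of t1] XiH.hyps(3) by (simp add: f'_def)
    next
      case False
      then have "r \<in> \<Gamma>" using r by simp
      then have "x \<notin> fv r" using XiH.hyps(3) by (auto simp: fvs_def)
      then show ?thesis using r rr \<open>r \<in> \<Gamma>\<close> XiH.prems(2) by auto
    qed
  qed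
  have a: "derives om (insert (App (ren f t1) (Var y)) \<Gamma>') (App HT (App (ren f t2) (Var y)))"
    using XiH.IH(1)[OF _ sub] XiH.prems(1) rr[of t2] XiH.hyps(3) fx by simp
  have b: "derives om \<Gamma>' (App LT (ren f t1))" using XiH.IH(2)[OF XiH.prems] by simp
  show ?case using derives.XiH[OF a b] y by simp
next
  case (FL t1 x \<Gamma> t2)
  obtain y where y: "y \<notin> fvs \<Gamma>' \<union> fv (ren f t1) \<union> fv (ren f t2)"
    using fresh[of "fvs \<Gamma>' \<union> fv (ren f t1) \<union> fv (ren f t2)"] finite_fvs[OF FL.prems(1)] finite_fv by auto
  define f' where "f' = f(x := y)"
  have rr: "ren f' r = ren f r" if "x \<notin> fv r" for r
    by (rule ren_cong) (use that in \<open>auto simp: f'_def\<close>)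
  have fx: "f' x = y" by (simp add: f'_def)
  have sub: "ren f' ` insert (App t1 (Var x)) \<Gamma> \<subseteq> insert (App (ren f t1) (Var y)) \<Gamma>'"
  proof
    fix a assume "a \<in> ren f' ` insert (App t1 (Var x)) \<Gamma>"
    then obtain r where r: "r \<in> insert (App t1 (Var x)) \<Gamma>" "a = ren f' r" by blast
    show "a \<in> insert (App (ren f t1) (Var y)) \<Gamma>'"
    proof (cases "r = App t1 (Var x)")
      case True then show ?thesis using r rr[of t1] FL.hyps(4) by (simp add: f'_def)
    next
      case False
      then have "r \<in> \<Gamma>" using r by simp
      then have "x \<notin> fv r" using FL.hyps(4) by (auto simp: fvs_def)
      then show ?thesis using r rr \<open>r \<in> \<Gamma>\<close> FL.prems(2) by auto
    qed
  qed
  have a: "derives om (insert (App (ren f t1) (Var y)) \<Gamma>') (App LT (ren f t2))"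
    using FL.IH(1)[OF _ sub] FL.prems(1) rr[of t2] FL.hyps(4) fx by simp
  have b: "derives om \<Gamma>' (App LT (ren f t1))" using FL.IH(2)[OF FL.prems] by simp
  show ?case using derives.FL[OF FL.hyps(1) a b] y by simp
qed

lemma weaken: "derives om \<Gamma> t \<Longrightarrow> finite \<Gamma>' \<Longrightarrow> \<Gamma> \<subseteq> \<Gamma>' \<Longrightarrow> derives om \<Gamma>' t"
  using derives_ren[of om \<Gamma> t \<Gamma>' id] by (simp add: ren_id)



definition cls :: "('b,'c) trm \<Rightarrow> ('b,'c) trm set set" where "cls t = {Collect (beq t)}"
definition CC :: "('b,'c) trm set set set" where "CC = range cls"
definition rp :: "('b,'c) trm set set \<Rightarrow> ('b,'c) trm" where "rp A = (SOME t. A = cls t)"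
definition apc :: "('b,'c) trm set set \<Rightarrow> ('b,'c) trm set set \<Rightarrow> ('b,'c) trm set set" where
  "apc A B = cls (App (rp A) (rp B))"
definition ST :: "('b,'c) trm" where
  "ST = Lam (Lam (Lam (App (App (Var 2) (Var 0)) (App (Var 1) (Var 0)))))"

lemma cls_eq: "cls s = cls t \<longleftrightarrow> beq s t"
proof
  assume "cls s = cls t"
  then have "Collect (beq s) = Collect (beq t)" by (simp add: cls_def)
  then have "t \<in> Collect (beq s)" by simp
  then show "beq s t" by simp
next
  assume h: "beq s t"
  have "Collect (beq s) = Collect (beq t)"
    using h beq_sym beq_trans by blast
  then show "cls s = cls t" by (simp add: cls_def)
qed

lemma rp_cls: "beq (rp (cls t)) t"
proof -
  have "cls t = cls (rp (cls t))" unfolding rp_def by (rule someI[of _ t]) simp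
  then show ?thesis using cls_eq beq_sym by metis
qed

lemma cls_rp: "A \<in> CC \<Longrightarrow> A = cls (rp A)"
  unfolding CC_def using rp_cls cls_eq by (metis imageE)

lemma apc_cls: "apc (cls s) (cls t) = cls (App s t)"
  unfolding apc_def cls_eq by (intro beq_App rp_cls)

lemma cls_CC[simp]: "cls t \<in> CC" by (simp add: CC_def)

lemma psubst_id: "(\<And>i. \<sigma> i = Var i) \<Longrightarrow> psubst \<sigma> t = t"
proof -
  assume "\<And>i. \<sigma> i = Var i"
  then have "\<sigma> = Var" by (simp add: fun_eq_iff)
  then show ?thesis by (simp add: psubst_Var)
qed

lemma subst_lift0: "subst (lift 0 x) 0 y = x"
  unfolding subst_psubst lift_ren lk_0 psubst_ren by (rule psubst_id) (simp add: ss_def)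

lemmas beq_trans' [trans] = beq_trans

lemma K_beq: "beq (App (App KT x) y) x"
proof -
  have "beq (App (App KT x) y) (App (subst (Lam (Var 1)) 0 x) y)"
    unfolding KT_def by (intro beq_step beta_eta.appL beta_eta.beta)
  also have "subst (Lam (Var 1)) 0 x = Lam (lift 0 x)" by simp
  also have "beq (App (Lam (lift 0 x)) y) (subst (lift 0 x) 0 y)" by (intro beq_step beta_eta.beta)
  finally show ?thesis by (simp add: subst_lift0)
qed

lemma S_beq: "beq (App (App (App ST x) y) z) (App (App x z) (App y z))"
proof -
  have "beq (App (App (App ST x) y) z)
     (App (App (subst (Lam (Lam (App (App (Var 2) (Var 0)) (App (Var 1) (Var 0))))) 0 x) y) z)"
    unfolding ST_def by (intro beq_step beta_eta.appL beta_eta.beta)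
  also have "subst (Lam (Lam (App (App (Var 2) (Var 0)) (App (Var 1) (Var 0))))) 0 x
     = Lam (Lam (App (App (lift 0 (lift 0 x)) (Var 0)) (App (Var 1) (Var 0))))" by simp
  also have "beq (App (App (Lam (Lam (App (App (lift 0 (lift 0 x)) (Var 0)) (App (Var 1) (Var 0))))) y) z)
      (App (subst (Lam (App (App (lift 0 (lift 0 x)) (Var 0)) (App (Var 1) (Var 0)))) 0 y) z)"
    by (intro beq_step beta_eta.appL beta_eta.beta)
  also have "subst (Lam (App (App (lift 0 (lift 0 x)) (Var 0)) (App (Var 1) (Var 0)))) 0 y
     = Lam (App (App (subst (lift 0 (lift 0 x)) 1 (lift 0 y)) (Var 0)) (App (lift 0 y) (Var 0)))" by simp
  also have "beq (App (Lam (App (App (subst (lift 0 (lift 0 x)) 1 (lift 0 y)) (Var 0)) (App (lift 0 y) (Var 0)))) z)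
      (subst (App (App (subst (lift 0 (lift 0 x)) 1 (lift 0 y)) (Var 0)) (App (lift 0 y) (Var 0))) 0 z)"
    by (intro beq_step beta_eta.beta)
  also have "subst (App (App (subst (lift 0 (lift 0 x)) 1 (lift 0 y)) (Var 0)) (App (lift 0 y) (Var 0))) 0 z
     = App (App (subst (subst (lift 0 (lift 0 x)) 1 (lift 0 y)) 0 z) z) (App (subst (lift 0 y) 0 z) z)" by simp
  also have "subst (subst (lift 0 (lift 0 x)) 1 (lift 0 y)) 0 z = x"
    unfolding subst_psubst lift_ren lk_0 psubst_ren psubst_psubst ren_ren
    by (rule psubst_id) (simp add: ss_def)
  finally show ?thesis by (simp add: subst_lift0)
qed

lemma comb_canon: "comb_alg (CC :: ('b,'c) trm set set set) apc (cls ST) (cls KT)"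
  unfolding comb_alg_def
proof (intro conjI ballI)
  fix X Y :: "('b,'c) trm set set" assume X: "X \<in> CC" and Y: "Y \<in> CC"
  show "apc X Y \<in> CC" by (simp add: apc_def)
  obtain x y where xy: "X = cls x" "Y = cls y" using X Y by (auto simp: CC_def)
  show "apc (apc (cls KT) X) Y = X"
    by (simp add: xy apc_cls cls_eq K_beq)
  fix Z :: "('b,'c) trm set set" assume Z: "Z \<in> CC"
  obtain z where z: "Z = cls z" using Z by (auto simp: CC_def)
  show "apc (apc (apc (cls ST) X) Y) Z = apc (apc X Z) (apc Y Z)"
    by (simp add: xy z apc_cls cls_eq S_beq)
qed simp_all

lemma ext_canon: "extensional_ca (CC :: ('b,'c) trm set set set) apc"
  unfolding extensional_ca_def
proof (intro ballI impI)
  fix M1 M2 :: "('b,'c) trm set set" assume M1: "M1 \<in> CC" and M2: "M2 \<in> CC" and h: "\<forall>X\<in>CC. apc M1 X = apc M2 X"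
  define m1 where "m1 = rp M1"
  define m2 where "m2 = rp M2"
  have e1: "M1 = cls m1" unfolding m1_def by (rule cls_rp[OF M1])
  have e2: "M2 = cls m2" unfolding m2_def by (rule cls_rp[OF M2])
  obtain n where n: "n \<notin> fv m1 \<union> fv m2" using fresh[of "fv m1 \<union> fv m2"] finite_fv by auto
  have "apc M1 (cls (Var n)) = apc M2 (cls (Var n))" using h by simp
  then have "beq (App m1 (Var n)) (App m2 (Var n))" by (simp add: e1 e2 apc_cls cls_eq)
  then have b: "beq (ren (\<lambda>i. if i = n then 0 else Suc i) (App m1 (Var n)))
                    (ren (\<lambda>i. if i = n then 0 else Suc i) (App m2 (Var n)))" by (rule beq_ren)
  have r: "ren (\<lambda>i. if i = n then 0 else Suc i) m = lift 0 m" if "n \<notin> fv m" for m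
    unfolding lift_ren lk_0 by (rule ren_cong) (use that in auto)
  have "beq (App (lift 0 m1) (Var 0)) (App (lift 0 m2) (Var 0))"
    using b r[of m1] r[of m2] n by simp
  then have "beq (Lam (App (lift 0 m1) (Var 0))) (Lam (App (lift 0 m2) (Var 0)))" by (rule beq_Lam)
  moreover have "beq (Lam (App (lift 0 m1) (Var 0))) m1" by (intro beq_step beta_eta.eta)
  moreover have "beq (Lam (App (lift 0 m2) (Var 0))) m2" by (intro beq_step beta_eta.eta)
  ultimately have "beq m1 m2" using beq_sym beq_trans by metis
  then show "M1 = M2" by (simp add: e1 e2 cls_eq)
qed

interpretation cn: ca CC apc "cls ST" "cls KT" "\<lambda>c. cls (Cst c)"
  by unfold_locales (auto simp: comb_canon ext_canon)

lemma ev_canon: fixes t :: "('b,'c) trm"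
  shows "(\<And>n. u n = cls (\<sigma> n)) \<Longrightarrow> cn.ev u t = cls (psubst \<sigma> t)"
proof (induction t arbitrary: u \<sigma>)
  case (App s t)
  have "cn.ev u s = cls (psubst \<sigma> s)" by (rule App.IH(1)[OF App.prems])
  moreover have "cn.ev u t = cls (psubst \<sigma> t)" by (rule App.IH(2)[OF App.prems])
  ultimately show ?case by (simp add: apc_cls)
next
  case (Lam t)
  have uC: "\<And>n. u n \<in> CC" using Lam.prems by simp
  show ?case
  proof (rule cn.eval_Lam_eq)
    show "cls (psubst \<sigma> (Lam t)) \<in> CC" by simp
    fix d' :: "('b,'c) trm set set" assume d': "d' \<in> CC"
    define r where "r = rp d'"
    have dr: "d' = cls r" unfolding r_def by (rule cls_rp[OF d'])
    define \<sigma>' where "\<sigma>' = scons r \<sigma>"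
    have "cn.ev (scons d' u) t = cls (psubst \<sigma>' t)"
    proof (rule Lam.IH)
      fix n show "scons d' u n = cls (\<sigma>' n)" by (cases n) (simp_all add: \<sigma>'_def dr Lam.prems)
    qed
    moreover have "apc (cls (psubst \<sigma> (Lam t))) d' = cls (psubst \<sigma>' t)"
    proof -
      have "apc (cls (psubst \<sigma> (Lam t))) d' = cls (App (Lam (psubst (up \<sigma>) t)) r)"
        by (simp add: dr apc_cls)
      also have "\<dots> = cls (subst (psubst (up \<sigma>) t) 0 r)"
        unfolding cls_eq by (intro beq_step beta_eta.beta)
      also have "subst (psubst (up \<sigma>) t) 0 r = psubst \<sigma>' t"
        unfolding subst_psubst psubst_psubst
      proof (rule psubst_cong)
        fix i show "(psubst (ss 0 r) \<circ> up \<sigma>) i = \<sigma>' i"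
      proof (cases i)
        case (Suc j)
        have "psubst (ss 0 r) (ren Suc (\<sigma> j)) = \<sigma> j"
          unfolding psubst_ren by (rule psubst_id) (simp add: ss_def)
        then show ?thesis using Suc by (simp add: \<sigma>'_def)
      qed (simp add: \<sigma>'_def ss_def)
      qed
      finally show ?thesis .
    qed
    ultimately show "apc (cls (psubst \<sigma> (Lam t))) d' = cn.ev (scons d' u) t" by simp
  qed
qed simp_all



definition StC :: "('b,'c) trm set set set" where "StC = {{\<Delta>} | \<Delta>. infinite (- fvs \<Delta>)}"
definition leC :: "('b,'c) trm set set \<Rightarrow> ('b,'c) trm set set \<Rightarrow> bool" where "leC a b = (\<Union>a \<subseteq> \<Union>b)"
definition vsC :: "bool \<Rightarrow> ('b,'c) trm set set \<Rightarrow> ('b,'c) trm set set set" where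
  "vsC om X = {a \<in> StC. provable om (\<Union>a) (rp X)}"

lemma prov_beq: "provable om \<Delta> s \<Longrightarrow> beq s t \<Longrightarrow> provable om \<Delta> t"
  unfolding provable_def by (meson derives.Eq)

lemma prov_mono: "provable om \<Delta> t \<Longrightarrow> \<Delta> \<subseteq> \<Delta>' \<Longrightarrow> provable om \<Delta>' t"
  unfolding provable_def by blast

lemma vsC_cls: "a \<in> vsC om (cls t) \<longleftrightarrow> a \<in> StC \<and> provable om (\<Union>a) t"
proof -
  have "provable om (\<Union>a) (rp (cls t)) \<longleftrightarrow> provable om (\<Union>a) t"
    using prov_beq[OF _ rp_cls] prov_beq[OF _ beq_sym[OF rp_cls]] by blast
  then show ?thesis unfolding vsC_def by blast
qed

lemma prov_ax: "t \<in> \<Delta> \<Longrightarrow> provable om \<Delta> t"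
proof -
  have "derives om (insert t {}) t" by (rule derives.ax) simp
  moreover assume "t \<in> \<Delta>"
  ultimately show ?thesis unfolding provable_def by (intro exI[of _ "{t}"]) simp
qed

lemma prov_two:
  assumes "provable om \<Delta> a" "provable om \<Delta> b"
  shows "\<exists>\<Gamma>. \<Gamma> \<subseteq> \<Delta> \<and> finite \<Gamma> \<and> derives om \<Gamma> a \<and> derives om \<Gamma> b"
proof -
  obtain G1 where G1: "G1 \<subseteq> \<Delta>" "finite G1" "derives om G1 a" using assms(1) unfolding provable_def by blast
  obtain G2 where G2: "G2 \<subseteq> \<Delta>" "finite G2" "derives om G2 b" using assms(2) unfolding provable_def by blast
  have "derives om (G1 \<union> G2) a" by (rule weaken[OF G1(3)]) (use G1 G2 in auto)
  moreover have "derives om (G1 \<union> G2) b" by (rule weaken[OF G2(3)]) (use G1 G2 in auto)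
  ultimately show ?thesis using G1 G2 by (intro exI[of _ "G1 \<union> G2"]) auto
qed

lemma prov_Hi: "provable om \<Delta> t \<Longrightarrow> provable om \<Delta> (App HT t)"
proof -
  assume "provable om \<Delta> t"
  then obtain G where G: "G \<subseteq> \<Delta>" "finite G" "derives om G t" unfolding provable_def by blast
  have "derives om G (App HT t)" by (rule derives.Hi[OF G(3)])
  then show ?thesis using G unfolding provable_def by (intro exI[of _ G]) simp
qed

lemma prov_LH: "provable om \<Delta> (App LT HT)"
proof -
  have "derives om {} (App LT HT)" by (rule derives.LH) simp
  then show ?thesis unfolding provable_def by (intro exI[of _ "{}"]) simp
qed

lemma prov_LA: "provable om \<Delta> (App LT (Cst (At \<tau>)))"
proof -
  have "derives om {} (App LT (Cst (At \<tau>)))" by (rule derives.LA) simp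
  then show ?thesis unfolding provable_def by (intro exI[of _ "{}"]) simp
qed

lemma prov_Xie: "provable om \<Delta> (App (App XiT x) y) \<Longrightarrow> provable om \<Delta> (App x z) \<Longrightarrow> provable om \<Delta> (App y z)"
proof -
  assume a: "provable om \<Delta> (App (App XiT x) y)" and b: "provable om \<Delta> (App x z)"
  from prov_two[OF a b] obtain G where G: "G \<subseteq> \<Delta>" "finite G" "derives om G (App (App XiT x) y)" "derives om G (App x z)"
    by auto
  have "derives om G (App y z)" by (rule derives.Xie[OF G(3) G(4)])
  then show ?thesis using G unfolding provable_def by (intro exI[of _ G]) simp
qed

lemma prov_split:
  assumes "provable om \<Delta> a" "provable om (insert c \<Delta>) b"
  shows "\<exists>\<Gamma>. \<Gamma> \<subseteq> \<Delta> \<and> finite \<Gamma> \<and> derives om \<Gamma> a \<and> derives om (insert c \<Gamma>) b"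
proof -
  obtain G1 where G1: "G1 \<subseteq> \<Delta>" "finite G1" "derives om G1 a" using assms(1) unfolding provable_def by blast
  obtain G2 where G2: "G2 \<subseteq> insert c \<Delta>" "finite G2" "derives om G2 b" using assms(2) unfolding provable_def by blast
  define G where "G = G1 \<union> (G2 - {c})"
  have GD: "G \<subseteq> \<Delta>" "finite G" using G1 G2 by (auto simp: G_def)
  have "derives om G a" by (rule weaken[OF G1(3)]) (use GD in \<open>auto simp: G_def\<close>)
  moreover have "derives om (insert c G) b" by (rule weaken[OF G2(3)]) (use GD in \<open>auto simp: G_def\<close>)
  ultimately show ?thesis using GD by (intro exI[of _ G]) simp
qed

lemma prov_Xii:
  assumes "provable om \<Delta> (App LT x)" "provable om (insert (App x (Var n)) \<Delta>) (App y (Var n))"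
    and "n \<notin> fvs \<Delta>" "n \<notin> fv x" "n \<notin> fv y"
  shows "provable om \<Delta> (App (App XiT x) y)"
proof -
  obtain G where G: "G \<subseteq> \<Delta>" "finite G" "derives om G (App LT x)"
     "derives om (insert (App x (Var n)) G) (App y (Var n))"
    using prov_split[OF assms(1,2)] by auto
  have "n \<notin> fvs G" using fvs_mono[OF G(1)] assms(3) by blast
  then have "derives om G (App (App XiT x) y)" by (intro derives.Xii[OF G(4) G(3)]) (use assms in simp)
  then show ?thesis using G unfolding provable_def by (intro exI[of _ G]) simp
qed

lemma prov_XiH:
  assumes "provable om \<Delta> (App LT x)" "provable om (insert (App x (Var n)) \<Delta>) (App HT (App y (Var n)))"
    and "n \<notin> fvs \<Delta>" "n \<notin> fv x" "n \<notin> fv y"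
  shows "provable om \<Delta> (App HT (App (App XiT x) y))"
proof -
  obtain G where G: "G \<subseteq> \<Delta>" "finite G" "derives om G (App LT x)"
     "derives om (insert (App x (Var n)) G) (App HT (App y (Var n)))"
    using prov_split[OF assms(1,2)] by auto
  have "n \<notin> fvs G" using fvs_mono[OF G(1)] assms(3) by blast
  then have "derives om G (App HT (App (App XiT x) y))" by (intro derives.XiH[OF G(4) G(3)]) (use assms in simp)
  then show ?thesis using G unfolding provable_def by (intro exI[of _ G]) simp
qed

lemma prov_FL:
  assumes "om" "provable om \<Delta> (App LT x)" "provable om (insert (App x (Var n)) \<Delta>) (App LT y)"
    and "n \<notin> fvs \<Delta>" "n \<notin> fv x" "n \<notin> fv y"
  shows "provable om \<Delta> (App LT (App (App FT x) y))"
proof -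
  obtain G where G: "G \<subseteq> \<Delta>" "finite G" "derives om G (App LT x)"
     "derives om (insert (App x (Var n)) G) (App LT y)"
    using prov_split[OF assms(2,3)] by auto
  have "n \<notin> fvs G" using fvs_mono[OF G(1)] assms(4) by blast
  then have "derives om G (App LT (App (App FT x) y))" by (intro derives.FL[OF assms(1) G(4) G(3)]) (use assms in simp)
  then show ?thesis using G unfolding provable_def by (intro exI[of _ G]) simp
qed

lemma StC_ext: "infinite (- fvs \<Delta>) \<Longrightarrow> {insert a \<Delta>} \<in> StC"
proof -
  assume h: "infinite (- fvs \<Delta>)"
  have e: "- fvs (insert a \<Delta>) = - fvs \<Delta> - fv a" by auto
  have "infinite (- fvs (insert a \<Delta>))" unfolding e by (rule Diff_infinite_finite[OF finite_fv h])
  then show ?thesis unfolding StC_def by (intro CollectI exI[of _ "insert a \<Delta>"]) simp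
qed

lemma fresh_St: "infinite (- fvs \<Delta>) \<Longrightarrow> finite B \<Longrightarrow> \<exists>n. n \<notin> fvs \<Delta> \<and> n \<notin> B"
proof -
  assume "infinite (- fvs \<Delta>)" "finite B"
  then have "infinite (- fvs \<Delta> - B)" using Diff_infinite_finite by blast
  then obtain n where "n \<in> - fvs \<Delta> - B" using infinite_imp_nonempty by blast
  then show ?thesis by blast
qed

lemma HV_canon: "eval CC apc (\<lambda>c. cls (Cst c)) (\<lambda>_. cls KT) (HT :: ('b,'c) trm) = cls HT"
  using ev_canon[of "\<lambda>_. cls KT" "\<lambda>_. KT" HT] by (simp add: closed_psubst)
lemma FV_canon: "eval CC apc (\<lambda>c. cls (Cst c)) (\<lambda>_. cls KT) (FT :: ('b,'c) trm) = cls FT"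
  using ev_canon[of "\<lambda>_. cls KT" "\<lambda>_. KT" FT] by (simp add: closed_psubst)


lemma StC_D: "s \<in> StC \<Longrightarrow> \<exists>\<Delta>. s = {\<Delta>} \<and> infinite (- fvs \<Delta>)"
  unfolding StC_def by blast

lemma StC_I: "infinite (- fvs \<Delta>) \<Longrightarrow> {\<Delta>} \<in> StC"
  unfolding StC_def by blast

lemma canon_premodel:
  "premodel StC leC (CC :: ('b,'c) trm set set set) apc (cls ST) (cls KT) (\<lambda>c. cls (Cst c)) (vsC om)"
  unfolding premodel_def
proof (intro conjI)
  show "comb_alg (CC :: ('b,'c) trm set set set) apc (cls ST) (cls KT)" by (rule comb_canon)
  show "extensional_ca (CC :: ('b,'c) trm set set set) apc" by (rule ext_canon)
  show "\<forall>c. cls (Cst c) \<in> (CC :: ('b,'c) trm set set set)" by simp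
  show "\<forall>s\<in>(StC :: ('b,'c) trm set set set). leC s s" by (simp add: leC_def)
  show "\<forall>s\<in>(StC :: ('b,'c) trm set set set). \<forall>s'\<in>StC. leC s s' \<and> leC s' s \<longrightarrow> s = s'"
  proof (intro ballI impI)
    fix s s' :: "('b,'c) trm set set" assume "s \<in> StC" "s' \<in> StC" and le: "leC s s' \<and> leC s' s"
    then obtain D D' where "s = {D}" "s' = {D'}" using StC_D by blast
    then show "s = s'" using le unfolding leC_def by auto
  qed
  show "\<forall>s1\<in>(StC :: ('b,'c) trm set set set). \<forall>s2\<in>StC. \<forall>s3\<in>StC. leC s1 s2 \<and> leC s2 s3 \<longrightarrow> leC s1 s3"
    unfolding leC_def by blast
  show "\<forall>X\<in>(CC :: ('b,'c) trm set set set). vsC om X \<subseteq> StC \<and> (\<forall>s\<in>vsC om X. \<forall>s'\<in>StC. leC s s' \<longrightarrow> s' \<in> vsC om X)"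
    unfolding vsC_def leC_def using prov_mono by blast
qed

lemma fresh_for: "infinite (- fvs \<Delta>) \<Longrightarrow> \<exists>n. n \<notin> fvs \<Delta> \<and> n \<notin> fv x \<and> n \<notin> fv y"
proof -
  assume h: "infinite (- fvs \<Delta>)"
  have "finite (fv x \<union> fv y)" by (simp add: finite_fv)
  from fresh_St[OF h this] show ?thesis by blast
qed

lemma cc1:
  assumes inf: "infinite (- fvs \<Delta>)" and L: "provable om \<Delta> (App LT x)"
    and H: "\<forall>s'\<in>StC. \<forall>Z\<in>CC. leC {\<Delta>} s' \<and> s' \<in> vsC om (apc (cls x) Z) \<longrightarrow> s' \<in> vsC om (apc (cls y) Z)"
  shows "provable om \<Delta> (App (App XiT x) y)"
proof -
  obtain n where n: "n \<notin> fvs \<Delta>" "n \<notin> fv x" "n \<notin> fv y" using fresh_for[OF inf] by blast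
  define s' where "s' = {insert (App x (Var n)) \<Delta>}"
  have s'St: "s' \<in> StC" unfolding s'_def by (rule StC_ext[OF inf])
  have le: "leC {\<Delta>} s'" by (auto simp: leC_def s'_def)
  have "s' \<in> vsC om (apc (cls x) (cls (Var n)))"
    unfolding apc_cls vsC_cls using s'St by (auto simp: s'_def intro: prov_ax)
  then have "s' \<in> vsC om (apc (cls y) (cls (Var n)))" using H s'St le cls_CC by blast
  then have "provable om (insert (App x (Var n)) \<Delta>) (App y (Var n))"
    unfolding apc_cls vsC_cls by (simp add: s'_def)
  then show ?thesis using prov_Xii[OF L _ n] by blast
qed

lemma cc3:
  assumes inf: "infinite (- fvs \<Delta>)" and L: "provable om \<Delta> (App LT x)"
    and H: "\<forall>s'\<in>StC. \<forall>Z\<in>CC. leC {\<Delta>} s' \<and> s' \<in> vsC om (apc (cls x) Z) \<longrightarrow> s' \<in> vsC om (apc (cls HT) (apc (cls y) Z))"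
  shows "provable om \<Delta> (App HT (App (App XiT x) y))"
proof -
  obtain n where n: "n \<notin> fvs \<Delta>" "n \<notin> fv x" "n \<notin> fv y" using fresh_for[OF inf] by blast
  define s' where "s' = {insert (App x (Var n)) \<Delta>}"
  have s'St: "s' \<in> StC" unfolding s'_def by (rule StC_ext[OF inf])
  have le: "leC {\<Delta>} s'" by (auto simp: leC_def s'_def)
  have "s' \<in> vsC om (apc (cls x) (cls (Var n)))"
    unfolding apc_cls vsC_cls using s'St by (auto simp: s'_def intro: prov_ax)
  then have "s' \<in> vsC om (apc (cls HT) (apc (cls y) (cls (Var n))))" using H s'St le cls_CC by blast
  then have "provable om (insert (App x (Var n)) \<Delta>) (App HT (App y (Var n)))"
    unfolding apc_cls vsC_cls by (simp add: s'_def)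
  then show ?thesis using prov_XiH[OF L _ n] by blast
qed

lemma cc4:
  assumes om: om and inf: "infinite (- fvs \<Delta>)" and L: "provable om \<Delta> (App LT x)"
    and H: "\<forall>s'\<in>StC. leC {\<Delta>} s' \<and> (\<exists>Z\<in>CC. s' \<in> vsC om (apc (cls x) Z)) \<longrightarrow> s' \<in> vsC om (apc (cls LT) (cls y))"
  shows "provable om \<Delta> (App LT (App (App FT x) y))"
proof -
  obtain n where n: "n \<notin> fvs \<Delta>" "n \<notin> fv x" "n \<notin> fv y" using fresh_for[OF inf] by blast
  define s' where "s' = {insert (App x (Var n)) \<Delta>}"
  have s'St: "s' \<in> StC" unfolding s'_def by (rule StC_ext[OF inf])
  have le: "leC {\<Delta>} s'" by (auto simp: leC_def s'_def)
  have "s' \<in> vsC om (apc (cls x) (cls (Var n)))"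
    unfolding apc_cls vsC_cls using s'St by (auto simp: s'_def intro: prov_ax)
  then have "s' \<in> vsC om (apc (cls LT) (cls y))" using H s'St le cls_CC by blast
  then have "provable om (insert (App x (Var n)) \<Delta>) (App LT y)"
    unfolding apc_cls vsC_cls by (simp add: s'_def)
  then show ?thesis using prov_FL[OF om L _ n] by blast
qed


lemma vs_single: "infinite (- fvs \<Delta>) \<Longrightarrow> {\<Delta>} \<in> vsC om (cls t) \<longleftrightarrow> provable om \<Delta> t"
  by (simp add: vsC_cls StC_I)

lemma CC_D: "Z \<in> CC \<Longrightarrow> \<exists>z. Z = cls z" unfolding CC_def by blast

lemma canon_conds:
  fixes x y :: "('b,'c) trm"
  assumes inf: "infinite (- fvs \<Delta>)"
  shows "(({\<Delta>} \<in> vsC om (apc (cls (Cst Lc)) (cls x)) \<and>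
          (\<forall>s'\<in>StC. \<forall>Z\<in>CC. leC {\<Delta>} s' \<and> s' \<in> vsC om (apc (cls x) Z) \<longrightarrow> s' \<in> vsC om (apc (cls y) Z)))
           \<longrightarrow> {\<Delta>} \<in> vsC om (apc (apc (cls (Cst Xi)) (cls x)) (cls y)))
      \<and> ({\<Delta>} \<in> vsC om (apc (apc (cls (Cst Xi)) (cls x)) (cls y)) \<longrightarrow>
           (\<forall>Z\<in>CC. {\<Delta>} \<in> vsC om (apc (cls x) Z) \<longrightarrow> {\<Delta>} \<in> vsC om (apc (cls y) Z)))
      \<and> (({\<Delta>} \<in> vsC om (apc (cls (Cst Lc)) (cls x)) \<and>
          (\<forall>s'\<in>StC. \<forall>Z\<in>CC. leC {\<Delta>} s' \<and> s' \<in> vsC om (apc (cls x) Z) \<longrightarrow> s' \<in> vsC om (apc (cls HT) (apc (cls y) Z))))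
           \<longrightarrow> {\<Delta>} \<in> vsC om (apc (cls HT) (apc (apc (cls (Cst Xi)) (cls x)) (cls y))))
      \<and> (om \<longrightarrow> ({\<Delta>} \<in> vsC om (apc (cls (Cst Lc)) (cls x)) \<and>
          (\<forall>s'\<in>StC. leC {\<Delta>} s' \<and> (\<exists>Z\<in>CC. s' \<in> vsC om (apc (cls x) Z)) \<longrightarrow> s' \<in> vsC om (apc (cls (Cst Lc)) (cls y))))
           \<longrightarrow> {\<Delta>} \<in> vsC om (apc (cls (Cst Lc)) (apc (apc (cls FT) (cls x)) (cls y))))
      \<and> ({\<Delta>} \<in> vsC om (cls x) \<longrightarrow> {\<Delta>} \<in> vsC om (apc (cls HT) (cls x)))
      \<and> {\<Delta>} \<in> vsC om (apc (cls (Cst Lc)) (cls HT))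
      \<and> (\<forall>\<tau>. {\<Delta>} \<in> vsC om (apc (cls (Cst Lc)) (cls (Cst (At \<tau>)))))"
proof (intro conjI impI allI ballI)
  assume a: "{\<Delta>} \<in> vsC om (apc (cls (Cst Lc)) (cls x)) \<and>
          (\<forall>s'\<in>StC. \<forall>Z\<in>CC. leC {\<Delta>} s' \<and> s' \<in> vsC om (apc (cls x) Z) \<longrightarrow> s' \<in> vsC om (apc (cls y) Z))"
  have L: "provable om \<Delta> (App LT x)" using a vs_single[OF inf] by (simp add: apc_cls LT_def)
  have "provable om \<Delta> (App (App XiT x) y)" by (rule cc1[OF inf L]) (use a in blast)
  then show "{\<Delta>} \<in> vsC om (apc (apc (cls (Cst Xi)) (cls x)) (cls y))"
    using vs_single[OF inf] by (simp add: apc_cls XiT_def)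
next
  fix Z :: "('b,'c) trm set set"
  assume a: "{\<Delta>} \<in> vsC om (apc (apc (cls (Cst Xi)) (cls x)) (cls y))" and Z: "Z \<in> CC"
    and b: "{\<Delta>} \<in> vsC om (apc (cls x) Z)"
  obtain z where z: "Z = cls z" using CC_D[OF Z] by blast
  have "provable om \<Delta> (App (App XiT x) y)" using a vs_single[OF inf] by (simp add: apc_cls XiT_def)
  moreover have "provable om \<Delta> (App x z)" using b vs_single[OF inf] by (simp add: apc_cls z)
  ultimately have "provable om \<Delta> (App y z)" by (rule prov_Xie)
  then show "{\<Delta>} \<in> vsC om (apc (cls y) Z)" using vs_single[OF inf] by (simp add: apc_cls z)
next
  assume a: "{\<Delta>} \<in> vsC om (apc (cls (Cst Lc)) (cls x)) \<and>
          (\<forall>s'\<in>StC. \<forall>Z\<in>CC. leC {\<Delta>} s' \<and> s' \<in> vsC om (apc (cls x) Z) \<longrightarrow> s' \<in> vsC om (apc (cls HT) (apc (cls y) Z)))"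
  have L: "provable om \<Delta> (App LT x)" using a vs_single[OF inf] by (simp add: apc_cls LT_def)
  have "provable om \<Delta> (App HT (App (App XiT x) y))" by (rule cc3[OF inf L]) (use a in blast)
  then show "{\<Delta>} \<in> vsC om (apc (cls HT) (apc (apc (cls (Cst Xi)) (cls x)) (cls y)))"
    using vs_single[OF inf] by (simp add: apc_cls XiT_def)
next
  assume om: om and a: "{\<Delta>} \<in> vsC om (apc (cls (Cst Lc)) (cls x)) \<and>
          (\<forall>s'\<in>StC. leC {\<Delta>} s' \<and> (\<exists>Z\<in>CC. s' \<in> vsC om (apc (cls x) Z)) \<longrightarrow> s' \<in> vsC om (apc (cls (Cst Lc)) (cls y)))"
  have L: "provable om \<Delta> (App LT x)" using a vs_single[OF inf] by (simp add: apc_cls LT_def)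
  have "provable om \<Delta> (App LT (App (App FT x) y))" by (rule cc4[OF om inf L]) (use a in \<open>simp add: LT_def\<close>)
  then show "{\<Delta>} \<in> vsC om (apc (cls (Cst Lc)) (apc (apc (cls FT) (cls x)) (cls y)))"
    using vs_single[OF inf] by (simp add: apc_cls LT_def)
next
  assume "{\<Delta>} \<in> vsC om (cls x)"
  then have "provable om \<Delta> x" using vs_single[OF inf] by simp
  then have "provable om \<Delta> (App HT x)" by (rule prov_Hi)
  then show "{\<Delta>} \<in> vsC om (apc (cls HT) (cls x))" using vs_single[OF inf] by (simp add: apc_cls)
next
  show "{\<Delta>} \<in> vsC om (apc (cls (Cst Lc)) (cls HT))"
    using vs_single[OF inf] prov_LH by (simp add: apc_cls LT_def)
next
  fix \<tau> show "{\<Delta>} \<in> vsC om (apc (cls (Cst Lc)) (cls (Cst (At \<tau>))))"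
    using vs_single[OF inf] prov_LA by (simp add: apc_cls LT_def)
qed


lemma canon_kmodel:
  "kmodel om StC leC (CC :: ('b,'c) trm set set set) apc (cls ST) (cls KT) (\<lambda>c. cls (Cst c)) (vsC om)"
  unfolding kmodel_def Let_def HV_canon FV_canon
  apply (rule conjI[OF canon_premodel])
  apply (intro ballI)
  subgoal for X Y s
    apply (drule CC_D)
    apply (drule CC_D)
    apply (drule StC_D)
    apply (elim exE conjE)
    apply hypsubst
    apply (rule canon_conds)
    apply assumption
    done
  done

lemma completeness:
  fixes \<Gamma> :: "('b,'c) trm set" and t :: "('b,'c) trm"
  assumes v: "valid_at TYPE(('b, 'c) trm set set) TYPE(('b, 'c) trm set set) om \<Gamma> t"
  shows "provable om \<Gamma> t"
proof -
  define g where "g = (\<lambda>n::nat. 2 * n)"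
  define \<Delta> where "\<Delta> = ren g ` \<Gamma>"
  have "fvs \<Delta> \<subseteq> range g" by (auto simp: \<Delta>_def fvs_def fv_ren)
  moreover have "range (\<lambda>n::nat. 2 * n + 1) \<inter> range g = {}" by (auto simp: g_def) arith
  ultimately have "range (\<lambda>n::nat. 2 * n + 1) \<subseteq> - fvs \<Delta>" by blast
  moreover have "infinite (range (\<lambda>n::nat. 2 * n + 1))"
    using finite_imageD[of "\<lambda>n::nat. 2 * n + 1" UNIV] by (auto simp: inj_on_def)
  ultimately have inf: "infinite (- fvs \<Delta>)" using finite_subset by blast
  define u where "u = (\<lambda>n. cls (Var (g n)) :: ('b,'c) trm set set)"
  have uC: "\<forall>n. u n \<in> CC" by (simp add: u_def)
  have evu: "eval CC apc (\<lambda>c. cls (Cst c)) u r = cls (ren g r)" for r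
    unfolding u_def ren_psubst_Var by (rule ev_canon) simp
  have s0: "{\<Delta>} \<in> StC" by (rule StC_I[OF inf])
  have G: "\<forall>t'\<in>\<Gamma>. {\<Delta>} \<in> vsC om (eval CC apc (\<lambda>c. cls (Cst c)) u t')"
  proof
    fix t' assume "t' \<in> \<Gamma>"
    then have "provable om \<Delta> (ren g t')" by (intro prov_ax) (simp add: \<Delta>_def)
    then show "{\<Delta>} \<in> vsC om (eval CC apc (\<lambda>c. cls (Cst c)) u t')" by (simp add: evu vs_single[OF inf])
  qed
  have "{\<Delta>} \<in> vsC om (eval CC apc (\<lambda>c. cls (Cst c)) u t)"
    by (rule v[unfolded valid_at_def, rule_format, OF canon_kmodel s0 uC[rule_format] G[rule_format]])
  then have "provable om \<Delta> (ren g t)" by (simp add: evu vs_single[OF inf])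
  then obtain G0 where G0: "G0 \<subseteq> \<Delta>" "finite G0" "derives om G0 (ren g t)" unfolding provable_def by blast
  define h where "h = (\<lambda>n::nat. n div 2)"
  have hg: "ren h (ren g r) = r" for r :: "('b,'c) trm"
  proof -
    have "h \<circ> g = id" by (auto simp: h_def g_def)
    then show ?thesis by (simp add: ren_ren ren_id)
  qed
  have "derives om (ren h ` G0) (ren h (ren g t))" by (rule derives_ren[OF G0(3)]) (use G0 in auto)
  moreover have "ren h ` G0 \<subseteq> \<Gamma>"
  proof
    fix a assume "a \<in> ren h ` G0"
    then obtain b where "b \<in> G0" "a = ren h b" by blast
    then obtain c where "c \<in> \<Gamma>" "b = ren g c" using G0(1) by (auto simp: \<Delta>_def)
    then have "a = c" using hg[of c] \<open>a = ren h b\<close> by simp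
    then show "a \<in> \<Gamma>" using \<open>c \<in> \<Gamma>\<close> by simp
  qed
  ultimately show ?thesis unfolding provable_def using hg G0(2) by (intro exI[of _ "ren h ` G0"]) simp
qed

theorem mainTheorem5:
  fixes om :: bool and \<Gamma> :: "('b::finite, 'c) trm set" and t :: "('b, 'c) trm"
  shows "(provable om \<Gamma> t \<longleftrightarrow>
            valid_at TYPE(('b, 'c) trm set set) TYPE(('b, 'c) trm set set) om \<Gamma> t)
       \<and> (provable om \<Gamma> t \<longrightarrow> valid_at TYPE('d) TYPE('s) om \<Gamma> t)"
proof -
  have 1: "provable om \<Gamma> t \<Longrightarrow> valid_at TYPE(('b, 'c) trm set set) TYPE(('b, 'c) trm set set) om \<Gamma> t"
    by (rule soundness)
  have 2: "valid_at TYPE(('b, 'c) trm set set) TYPE(('b, 'c) trm set set) om \<Gamma> t \<Longrightarrow> provable om \<Gamma> t"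
    by (rule completeness)
  have 3: "provable om \<Gamma> t \<Longrightarrow> valid_at TYPE('d) TYPE('s) om \<Gamma> t"
    by (rule soundness)
  show ?thesis using 1 2 3 by blast
qed


end
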